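(* Let $\alpha>2$, $P>0$, $\sigma^2\ge0$, $\gamma_{th}>0$, $\mu>0$, let $l\ge1$ be an integer, and let $0<D_{i-1}<D_i$. Let $R$ be a random variable with density $f_R(r)=\frac{2r}{D_i^2-D_{i-1}^2}$ on $[D_{i-1},D_i]$. Let $\Phi$ be a Poisson point process of intensity $\mu$ on $\{y\in\mathbb{R}^2:|y|\ge D_i\}$, independent of $R$. For $\beta=1,\dots,l$ define $$\mathrm{SINR}^\beta=\frac{P h_0^\beta R^{-\alpha}}{\sum_{y\in\Phi}P h_y^\beta |y|^{-\alpha}+\sigma^2},$$ where all fading variables are i.i.d. $\mathrm{Exp}(1)$ and independent of $R$ and $\Phi$. Then $$p(\gamma_{th}):=\mathbb{P}\big[\mathrm{SINR}^\beta\ge\gamma_{th}\ \forall\beta\le l\big]=\int_{D_{i-1}}^{D_i}\exp\Big(-\frac{l\gamma_{th}\sigma^2 r^\alpha}{P}\Big)\exp\big(-2\pi\mu\,\mathcal{F}_i(r)\big)f_R(r)\,dr,$$ where $$\mathcal{F}_i(r)=\int_{D_i}^{\infty}\Big(1-\Big(\frac{1}{1+\gamma_{th}r^\alpha y^{-\alpha}}\Big)^{l}\Big)y\,dy .$$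
   Context: This is the uplink model for NB-IoT "CE group $i$", $i\in\{1,2\}$ (for group 2 it is "Case 1"). All devices transmit with the same fixed power $P$. The typical device is located uniformly in the annulus $D_{i-1}\le r\le D_i$ around its base station. In the paper $D_0=(\delta_1\omega/P_{DL})^{-1/\alpha}$, $D_1=(\delta_2\omega/P_{DL})^{-1/\alpha}$ and $D_2=1/\sqrt{\pi\lambda_B}$. The interferer intensity is $\mu=\mathcal{A}_i^1\mathcal{R}_i^1\lambda_i^a$, where $\lambda_i^a=\lambda_i/S_i$. The index $l=4k_i$ counts the symbol groups over $k_i$ repetitions; interferer locations are common to all $l$ symbol groups and the fading is independent across them. *)

theory Defs
  imports "HOL-Probability.Probability"
begin

text \<open>Points of the plane are represented as complex numbers, so that cmod y = |y|.
  A point process is represented by an enumeration Y :: nat => omega => complex of its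
  points (counted with multiplicity via the indices).\<close>

definition pp_count :: "(nat \<Rightarrow> 'a \<Rightarrow> complex) \<Rightarrow> complex set \<Rightarrow> 'a \<Rightarrow> nat" where
  "pp_count Y A \<omega> = card {n. Y n \<omega> \<in> A}"

definition poisson_pp ::
  "'a measure \<Rightarrow> real \<Rightarrow> complex set \<Rightarrow> (nat \<Rightarrow> 'a \<Rightarrow> complex) \<Rightarrow> bool" where
  "poisson_pp M \<mu> S Y \<longleftrightarrow>
     (\<forall>n. Y n \<in> borel_measurable M) \<and>
     (AE \<omega> in M. \<forall>n. Y n \<omega> \<in> S) \<and>
     (\<forall>A. A \<in> sets borel \<and> bounded A \<longrightarrow> (AE \<omega> in M. finite {n. Y n \<omega> \<in> A})) \<and>
     (\<forall>(k::nat) (A :: nat \<Rightarrow> complex set).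
        (\<forall>j<k. A j \<in> sets borel \<and> A j \<subseteq> S \<and> bounded (A j)) \<and> disjoint_family_on A {..<k}
        \<longrightarrow> prob_space.indep_vars M (\<lambda>_. count_space UNIV) (\<lambda>j. pp_count Y (A j)) {..<k} \<and>
            (\<forall>j<k. \<forall>m::nat.
               measure M {\<omega> \<in> space M. pp_count Y (A j) \<omega> = m}
               = (\<mu> * measure lborel (A j)) ^ m / fact m * exp (- (\<mu> * measure lborel (A j)))))"

definition F_i :: "real \<Rightarrow> real \<Rightarrow> nat \<Rightarrow> real \<Rightarrow> real \<Rightarrow> real" where
  "F_i \<alpha> \<gamma> l D1 r =
     (LBINT y:{D1..}. (1 - (1 / (1 + \<gamma> * r powr \<alpha> * y powr (-\<alpha>))) ^ l) * y)"

end

theory Submission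
  imports Defs
begin

lemma (in prob_space) pair_distr_indep:
  assumes X[measurable]: "X \<in> M \<rightarrow>\<^sub>M MX" and W[measurable]: "W \<in> M \<rightarrow>\<^sub>M MW"
    and ind: "indep_set (sets (vimage_algebra (space M) X MX)) (sets (vimage_algebra (space M) W MW))"
  shows "distr M MX X \<Otimes>\<^sub>M distr M MW W = distr M (MX \<Otimes>\<^sub>M MW) (\<lambda>x. (X x, W x))"
proof -
  interpret PX: prob_space "distr M MX X" by (rule prob_space_distr) simp
  interpret PW: prob_space "distr M MW W" by (rule prob_space_distr) simp
  interpret PP: pair_prob_space "distr M MX X" "distr M MW W" ..
  have XY: "(\<lambda>x. (X x, W x)) \<in> M \<rightarrow>\<^sub>M (MX \<Otimes>\<^sub>M MW)" by simp
  show ?thesis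
  proof (rule pair_measure_eqI)
    show "sigma_finite_measure (distr M MX X)" ..
    show "sigma_finite_measure (distr M MW W)" ..
    fix A B assume A: "A \<in> sets (distr M MX X)" and B: "B \<in> sets (distr M MW W)"
    have "emeasure (distr M (MX \<Otimes>\<^sub>M MW) (\<lambda>x. (X x, W x))) (A \<times> B) = emeasure M ((\<lambda>x. (X x, W x)) -` (A \<times> B) \<inter> space M)"
      using A B by (intro emeasure_distr[OF XY]) auto
    also have "(\<lambda>x. (X x, W x)) -` (A \<times> B) \<inter> space M = (X -` A \<inter> space M) \<inter> (W -` B \<inter> space M)" by auto
    also have "emeasure M \<dots> = emeasure M (X -` A \<inter> space M) * emeasure M (W -` B \<inter> space M)"
    proof -
      have "X -` A \<inter> space M \<in> sets (vimage_algebra (space M) X MX)"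
        using A measurable_space[OF X] by (subst sets_vimage_algebra2) auto
      moreover have "W -` B \<inter> space M \<in> sets (vimage_algebra (space M) W MW)"
        using B measurable_space[OF W] by (subst sets_vimage_algebra2) auto
      ultimately show ?thesis using indep_setD[OF ind]
        by (simp add: emeasure_eq_measure measure_nonneg ennreal_mult)
    qed
    also have "\<dots> = emeasure (distr M MX X) A * emeasure (distr M MW W) B"
      using A B by (simp add: emeasure_distr)
    finally show "emeasure (distr M MX X) A * emeasure (distr M MW W) B = emeasure (distr M (MX \<Otimes>\<^sub>M MW) (\<lambda>x. (X x, W x))) (A \<times> B)" by simp
  qed simp
qed

lemma (in prob_space) freeze:
  fixes f :: "'b \<times> 'c \<Rightarrow> real"
  assumes X[measurable]: "X \<in> M \<rightarrow>\<^sub>M MX" and W[measurable]: "W \<in> M \<rightarrow>\<^sub>M MW"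
    and ind: "indep_set (sets (vimage_algebra (space M) X MX)) (sets (vimage_algebra (space M) W MW))"
    and f[measurable]: "f \<in> borel_measurable (MX \<Otimes>\<^sub>M MW)"
    and bnd: "\<And>x w. \<bar>f (x,w)\<bar> \<le> B"
  shows "(\<integral>\<omega>. f (X \<omega>, W \<omega>) \<partial>M) = (\<integral>\<omega>'. (\<integral>\<omega>. f (X \<omega>', W \<omega>) \<partial>M) \<partial>M)"
proof -
  have eq: "distr M MX X \<Otimes>\<^sub>M distr M MW W = distr M (MX \<Otimes>\<^sub>M MW) (\<lambda>x. (X x, W x))"
    by (rule pair_distr_indep[OF X W ind])
  interpret PX: prob_space "distr M MX X" by (rule prob_space_distr) simp
  interpret PW: prob_space "distr M MW W" by (rule prob_space_distr) simp
  interpret PP: pair_prob_space "distr M MX X" "distr M MW W" ..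
  have "(\<integral>\<omega>. f (X \<omega>, W \<omega>) \<partial>M) = integral\<^sup>L (distr M (MX \<Otimes>\<^sub>M MW) (\<lambda>x. (X x, W x))) f"
    by (subst integral_distr) auto
  also have "\<dots> = integral\<^sup>L (distr M MX X \<Otimes>\<^sub>M distr M MW W) f" by (simp add: eq)
  also have "\<dots> = (\<integral>x. (\<integral>w. f (x, w) \<partial>distr M MW W) \<partial>distr M MX X)"
  proof (rule PP.integral_fst'[symmetric])
    show "integrable (distr M MX X \<Otimes>\<^sub>M distr M MW W) f"
      by (rule PP.integrable_const_bound[where B=B]) (auto simp: bnd)
  qed
  also have "\<dots> = (\<integral>x. (\<integral>\<omega>. f (x, W \<omega>) \<partial>M) \<partial>distr M MX X)"
  proof (rule Bochner_Integration.integral_cong[OF refl])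
    fix x assume "x \<in> space (distr M MX X)"
    then have x: "x \<in> space MX" by simp
    show "(\<integral>w. f (x, w) \<partial>distr M MW W) = (\<integral>\<omega>. f (x, W \<omega>) \<partial>M)"
      using x by (subst integral_distr) auto
  qed
  also have "\<dots> = (\<integral>\<omega>'. (\<integral>\<omega>. f (X \<omega>', W \<omega>) \<partial>M) \<partial>M)"
  proof (subst integral_distr)
    show "(\<lambda>x. \<integral>\<omega>. f (x, W \<omega>) \<partial>M) \<in> borel_measurable MX" by measurable
  qed auto
  finally show ?thesis .
qed

lemma (in prob_space) exp_point_null:
  assumes D: "distributed M lborel X (exponential_density 1)"
  shows "prob {\<omega>\<in>space M. X \<omega> = w} = 0"
proof -
  have "emeasure M (X -` {w} \<inter> space M) = (\<integral>\<^sup>+x. ennreal (exponential_density 1 x) * indicator {w} x \<partial>lborel)"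
    using distributed_emeasure[OF D] by simp
  also have "\<dots> = (\<integral>\<^sup>+x. ennreal (exponential_density 1 w) * indicator {w} x \<partial>lborel)"
    by (rule nn_integral_cong_AE, rule AE_mp[OF AE_lborel_singleton[of w]]) auto
  finally have "emeasure M (X -` {w} \<inter> space M) = 0" by simp
  moreover have "X -` {w} \<inter> space M = {\<omega>\<in>space M. X \<omega> = w}" by auto
  ultimately show ?thesis by (simp add: measure_def)
qed

lemma (in prob_space) exp_tail_ge:
  assumes D: "distributed M lborel X (exponential_density 1)" and w: "0 \<le> w"
  shows "prob {\<omega>\<in>space M. w \<le> X \<omega>} = exp (- w)"
proof -
  have Xm[measurable]: "X \<in> borel_measurable M" using D using distributed_measurable[OF D] by (simp add: measurable_lborel2)
  have "{\<omega>\<in>space M. w \<le> X \<omega>} = {\<omega>\<in>space M. w < X \<omega>} \<union> {\<omega>\<in>space M. X \<omega> = w}" by auto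
  then have "prob {\<omega>\<in>space M. w \<le> X \<omega>} = prob {\<omega>\<in>space M. w < X \<omega>} + prob {\<omega>\<in>space M. X \<omega> = w}"
  proof -
    have "prob ({\<omega>\<in>space M. w < X \<omega>} \<union> {\<omega>\<in>space M. X \<omega> = w}) = prob {\<omega>\<in>space M. w < X \<omega>} + prob {\<omega>\<in>space M. X \<omega> = w}"
      by (rule finite_measure_Union) auto
    then show ?thesis using \<open>{\<omega>\<in>space M. w \<le> X \<omega>} = _\<close> by simp
  qed
  also have "\<dots> = exp (- w)"
    using exponential_distributedD_gt[OF D w] exp_point_null[OF D] by simp
  finally show ?thesis .
qed

lemma (in prob_space) exp_pos_AE:
  assumes D: "distributed M lborel X (exponential_density 1)"
  shows "AE \<omega> in M. 0 < X \<omega>"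
proof -
  have Xm[measurable]: "X \<in> borel_measurable M" using D using distributed_measurable[OF D] by (simp add: measurable_lborel2)
  have "prob {\<omega>\<in>space M. X \<omega> \<le> 0} = 0"
    using exponential_distributedD_le[OF D, of 0] by simp
  moreover have "{\<omega>\<in>space M. X \<omega> \<le> 0} \<in> sets M" by measurable
  ultimately have "AE \<omega> in M. \<omega> \<notin> {\<omega>\<in>space M. X \<omega> \<le> 0}" using prob_eq_0 by blast
  then show ?thesis by (rule AE_mp) (intro AE_I2, simp)
qed

lemma (in prob_space) exp_laplace:
  assumes D: "distributed M lborel X (exponential_density 1)" and s: "0 \<le> s"
  shows "(\<integral>\<omega>. exp (- (s * X \<omega>)) \<partial>M) = 1 / (1 + s)"
proof -
  have Xm[measurable]: "X \<in> borel_measurable M" using D using distributed_measurable[OF D] by (simp add: measurable_lborel2)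
  have "(\<integral>\<^sup>+\<omega>. ennreal (exp (- (s * X \<omega>))) \<partial>M) = (\<integral>\<^sup>+x. ennreal (exponential_density 1 x) * ennreal (exp (- (s * x))) \<partial>lborel)"
    by (rule distributed_nn_integral[OF D, symmetric]) simp
  also have "\<dots> = (\<integral>\<^sup>+x. ennreal (1 / (1 + s)) * ennreal (exponential_density (1 + s) x) \<partial>lborel)"
  proof (rule nn_integral_cong)
    fix x :: real
    have "exp (- x) * exp (- (s * x)) = 1 / (1 + s) * ((1 + s) * exp (- x * (1 + s)))"
      using s by (simp add: exp_add[symmetric] field_simps)
    then show "ennreal (exponential_density 1 x) * ennreal (exp (- (s * x))) = ennreal (1 / (1 + s)) * ennreal (exponential_density (1 + s) x)"
      using s by (auto simp: exponential_density_def ennreal_mult[symmetric])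
  qed
  also have "\<dots> = ennreal (1 / (1 + s)) * (\<integral>\<^sup>+x. ennreal (exponential_density (1 + s) x) \<partial>lborel)"
    by (rule nn_integral_cmult) simp
  also have "(\<integral>\<^sup>+x. ennreal (exponential_density (1 + s) x) \<partial>lborel) = 1"
  proof -
    interpret E: prob_space "density lborel (exponential_density (1 + s))"
      using s by (intro prob_space_exponential_density) simp
    show ?thesis using E.emeasure_space_1 by (simp add: emeasure_density)
  qed
  finally have nn: "(\<integral>\<^sup>+\<omega>. ennreal (exp (- (s * X \<omega>))) \<partial>M) = ennreal (1 / (1 + s))" by simp
  have "(\<integral>\<omega>. exp (- (s * X \<omega>)) \<partial>M) = enn2real (\<integral>\<^sup>+\<omega>. ennreal (exp (- (s * X \<omega>))) \<partial>M)"
    by (rule integral_eq_nn_integral) auto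
  also have "\<dots> = 1 / (1 + s)" using nn s by simp
  finally show ?thesis .
qed

lemma (in prob_space) exp_mean_nn:
  assumes D: "distributed M lborel X (exponential_density 1)"
  shows "(\<integral>\<^sup>+\<omega>. ennreal (X \<omega>) \<partial>M) = 1"
proof -
  have Xm[measurable]: "X \<in> borel_measurable M" using D using distributed_measurable[OF D] by (simp add: measurable_lborel2)
  have "(\<integral>\<^sup>+\<omega>. ennreal (X \<omega>) \<partial>M) = (\<integral>\<^sup>+x. ennreal (exponential_density 1 x) * ennreal x \<partial>lborel)"
    by (rule distributed_nn_integral[OF D, symmetric]) simp
  also have "\<dots> = (\<integral>\<^sup>+x. ennreal (x^1 * exp (-x)) * indicator {0 ..} x \<partial>lborel)"
    by (rule nn_integral_cong) (auto simp: exponential_density_def ennreal_mult[symmetric] mult.commute)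
  also have "\<dots> = 1" by (subst nn_intergal_power_times_exp_Ici) simp
  finally show ?thesis .
qed

lemma nn_integral_nat_rv:
  fixes X :: "'a \<Rightarrow> nat"
  assumes X: "X \<in> M \<rightarrow>\<^sub>M count_space UNIV"
  shows "(\<integral>\<^sup>+\<omega>. g (X \<omega>) \<partial>M) = (\<Sum>m. g m * emeasure M {\<omega>\<in>space M. X \<omega> = m})"
proof -
  have sets[measurable]: "{\<omega>\<in>space M. X \<omega> = m} \<in> sets M" for m
  proof -
    have "X -` {m} \<inter> space M \<in> sets M" by (rule measurable_sets[OF X]) simp
    moreover have "X -` {m} \<inter> space M = {\<omega>\<in>space M. X \<omega> = m}" by auto
    ultimately show ?thesis by simp
  qed
  have "(\<integral>\<^sup>+\<omega>. g (X \<omega>) \<partial>M) = (\<integral>\<^sup>+\<omega>. (\<Sum>m. g m * indicator {\<omega>\<in>space M. X \<omega> = m} \<omega>) \<partial>M)"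
  proof (rule nn_integral_cong)
    fix \<omega> assume w: "\<omega> \<in> space M"
    have "(\<Sum>m. g m * indicator {\<omega>\<in>space M. X \<omega> = m} \<omega>) = (\<Sum>m\<in>{X \<omega>}. g m * indicator {\<omega>\<in>space M. X \<omega> = m} \<omega>)"
      by (rule suminf_finite) (auto simp: indicator_def)
    then show "g (X \<omega>) = (\<Sum>m. g m * indicator {\<omega>\<in>space M. X \<omega> = m} \<omega>)" using w by simp
  qed
  also have "\<dots> = (\<Sum>m. \<integral>\<^sup>+\<omega>. g m * indicator {\<omega>\<in>space M. X \<omega> = m} \<omega> \<partial>M)"
    by (rule nn_integral_suminf) measurable
  also have "\<dots> = (\<Sum>m. g m * emeasure M {\<omega>\<in>space M. X \<omega> = m})"
    by (simp add: nn_integral_cmult_indicator sets)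
  finally show ?thesis .
qed

lemma poisson_laplace_sums:
  fixes lam v :: real
  shows "(\<lambda>m. exp (- (v * real m)) * (lam ^ m / fact m * exp (- lam))) sums exp (- (lam * (1 - exp (- v))))"
proof -
  have "(\<lambda>m. exp (- lam) * ((lam * exp (- v)) ^ m /\<^sub>R fact m)) sums (exp (- lam) * exp (lam * exp (- v)))"
    by (rule sums_mult) (rule exp_converges)
  moreover have "exp (- lam) * exp (lam * exp (- v)) = exp (- (lam * (1 - exp (- v))))"
    by (simp add: exp_add[symmetric] algebra_simps)
  moreover have "exp (- lam) * ((lam * exp (- v)) ^ m /\<^sub>R fact m) = exp (- (v * real m)) * (lam ^ m / fact m * exp (- lam))" for m
    by (simp add: power_mult_distrib exp_of_nat_mult[symmetric] divide_inverse mult.commute mult.left_commute)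
  ultimately show ?thesis by simp
qed

lemma poisson_mean_sums:
  fixes lam :: real
  shows "(\<lambda>m. real m * (lam ^ m / fact m * exp (- lam))) sums lam"
proof -
  have "(\<lambda>m. lam * exp (- lam) * (lam ^ m /\<^sub>R fact m)) sums (lam * exp (- lam) * exp lam)"
    by (rule sums_mult) (rule exp_converges)
  moreover have "lam * exp (- lam) * exp lam = lam" by (simp add: mult.assoc exp_add[symmetric])
  ultimately have s1: "(\<lambda>m. lam * exp (- lam) * (lam ^ m /\<^sub>R fact m)) sums lam" by simp
  have "real (Suc m) * (lam ^ (Suc m) / fact (Suc m) * exp (- lam)) = lam * exp (- lam) * (lam ^ m /\<^sub>R fact m)" for m
  proof -
    have "fact (Suc m) = (real (Suc m)) * (fact m :: real)" by (simp add: fact_Suc)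
    moreover have f0: "(fact m :: real) > 0" by simp
    moreover have "(fact m :: real) + fact m * real m > 0" using f0 by (simp add: add_pos_nonneg)
    ultimately show ?thesis by (simp add: field_simps)
  qed
  then have "(\<lambda>m. real (Suc m) * (lam ^ (Suc m) / fact (Suc m) * exp (- lam))) sums lam"
    using s1 by presburger
  then show ?thesis
    using sums_Suc_iff[where f="\<lambda>m. real m * (lam ^ m / fact m * exp (- lam))" and s=lam] by simp
qed

locale ppp = prob_space M for M :: "'a measure" +
  fixes mu :: real and S :: "complex set" and Y :: "nat \<Rightarrow> 'a \<Rightarrow> complex"
  assumes PPP: "poisson_pp M mu S Y" and mu_pos: "0 < mu"
begin

lemma Ymeas[measurable]: "Y n \<in> borel_measurable M"
  using PPP by (simp add: poisson_pp_def)

lemma AE_in_S: "AE \<omega> in M. \<forall>n. Y n \<omega> \<in> S"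
  using PPP by (simp add: poisson_pp_def)

lemma AE_finite: "A \<in> sets borel \<Longrightarrow> bounded A \<Longrightarrow> AE \<omega> in M. finite {n. Y n \<omega> \<in> A}"
  using PPP by (simp add: poisson_pp_def)

lemma count_multi:
  fixes k :: nat and A :: "nat \<Rightarrow> complex set"
  assumes "\<And>j. j < k \<Longrightarrow> A j \<in> sets borel \<and> A j \<subseteq> S \<and> bounded (A j)" and "disjoint_family_on A {..<k}"
  shows "indep_vars (\<lambda>_. count_space UNIV) (\<lambda>j. pp_count Y (A j)) {..<k}"
    and "\<And>j m. j < k \<Longrightarrow> measure M {\<omega> \<in> space M. pp_count Y (A j) \<omega> = m}
               = (mu * measure lborel (A j)) ^ m / fact m * exp (- (mu * measure lborel (A j)))"
proof -
  have H: "\<forall>(k::nat) (A :: nat \<Rightarrow> complex set).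
        (\<forall>j<k. A j \<in> sets borel \<and> A j \<subseteq> S \<and> bounded (A j)) \<and> disjoint_family_on A {..<k}
        \<longrightarrow> indep_vars (\<lambda>_. count_space UNIV) (\<lambda>j. pp_count Y (A j)) {..<k} \<and>
            (\<forall>j<k. \<forall>m::nat.
               measure M {\<omega> \<in> space M. pp_count Y (A j) \<omega> = m}
               = (mu * measure lborel (A j)) ^ m / fact m * exp (- (mu * measure lborel (A j))))"
    using PPP unfolding poisson_pp_def by (elim conjE) assumption
  have P0: "(\<forall>j<k. A j \<in> sets borel \<and> A j \<subseteq> S \<and> bounded (A j)) \<and> disjoint_family_on A {..<k}"
    using assms by auto
  have R: "indep_vars (\<lambda>_. count_space UNIV) (\<lambda>j. pp_count Y (A j)) {..<k} \<and>
            (\<forall>j<k. \<forall>m::nat.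
               measure M {\<omega> \<in> space M. pp_count Y (A j) \<omega> = m}
               = (mu * measure lborel (A j)) ^ m / fact m * exp (- (mu * measure lborel (A j))))"
    using H[rule_format, OF P0] .
  then show "indep_vars (\<lambda>_. count_space UNIV) (\<lambda>j. pp_count Y (A j)) {..<k}" by (rule conjunct1)
  show "\<And>j m. j < k \<Longrightarrow> measure M {\<omega> \<in> space M. pp_count Y (A j) \<omega> = m}
               = (mu * measure lborel (A j)) ^ m / fact m * exp (- (mu * measure lborel (A j)))"
    using R by simp
qed

lemma count_single:
  assumes "A \<in> sets borel" "A \<subseteq> S" "bounded A"
  shows count_rv: "pp_count Y A \<in> M \<rightarrow>\<^sub>M count_space UNIV"
    and count_dist: "measure M {\<omega> \<in> space M. pp_count Y A \<omega> = m}
               = (mu * measure lborel A) ^ m / fact m * exp (- (mu * measure lborel A))"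
proof -
  have d: "disjoint_family_on (\<lambda>_::nat. A) {..<1}" by (simp add: disjoint_family_on_def)
  have "indep_vars (\<lambda>_. count_space UNIV) (\<lambda>j. pp_count Y A) {..<(1::nat)}"
    using count_multi(1)[of "1::nat" "\<lambda>_. A"] assms d by auto
  then show "pp_count Y A \<in> M \<rightarrow>\<^sub>M count_space UNIV"
    unfolding indep_vars_def by auto
  show "measure M {\<omega> \<in> space M. pp_count Y A \<omega> = m}
               = (mu * measure lborel A) ^ m / fact m * exp (- (mu * measure lborel A))"
    using count_multi(2)[of "1::nat" "\<lambda>_. A" 0 m] assms d by auto
qed

lemma count_nn_integral:
  assumes "A \<in> sets borel" "A \<subseteq> S" "bounded A"
  shows "(\<integral>\<^sup>+\<omega>. g (pp_count Y A \<omega>) \<partial>M)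
     = (\<Sum>m. g m * ennreal ((mu * measure lborel A) ^ m / fact m * exp (- (mu * measure lborel A))))"
  using nn_integral_nat_rv[OF count_rv[OF assms], of g] count_dist[OF assms]
  by (simp add: emeasure_eq_measure)

lemma count_laplace:
  assumes "A \<in> sets borel" "A \<subseteq> S" "bounded A" and v: "0 \<le> v"
  shows "(\<integral>\<omega>. exp (- (v * real (pp_count Y A \<omega>))) \<partial>M) = exp (- (mu * measure lborel A * (1 - exp (- v))))"
proof -
  let ?lam = "mu * measure lborel A"
  have rv[measurable]: "pp_count Y A \<in> M \<rightarrow>\<^sub>M count_space UNIV" by (rule count_rv[OF assms(1-3)])
  have lam0: "0 \<le> ?lam" using mu_pos by simp
  have "(\<integral>\<^sup>+\<omega>. ennreal (exp (- (v * real (pp_count Y A \<omega>)))) \<partial>M)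
     = (\<Sum>m. ennreal (exp (- (v * real m))) * ennreal (?lam ^ m / fact m * exp (- ?lam)))"
    by (rule count_nn_integral[OF assms(1-3)])
  also have "\<dots> = (\<Sum>m. ennreal (exp (- (v * real m)) * (?lam ^ m / fact m * exp (- ?lam))))"
    by (intro arg_cong[where f=suminf] ext, rule ennreal_mult'[symmetric]) simp
  also have "\<dots> = ennreal (exp (- (?lam * (1 - exp (- v)))))"
    by (rule suminf_ennreal_eq) (use lam0 poisson_laplace_sums in auto)
  finally have nn: "(\<integral>\<^sup>+\<omega>. ennreal (exp (- (v * real (pp_count Y A \<omega>)))) \<partial>M) = ennreal (exp (- (?lam * (1 - exp (- v)))))" .
  have "(\<integral>\<omega>. exp (- (v * real (pp_count Y A \<omega>))) \<partial>M) = enn2real (\<integral>\<^sup>+\<omega>. ennreal (exp (- (v * real (pp_count Y A \<omega>)))) \<partial>M)"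
    by (rule integral_eq_nn_integral) auto
  then show ?thesis using nn by simp
qed

lemma count_mean:
  assumes "A \<in> sets borel" "A \<subseteq> S" "bounded A"
  shows "(\<integral>\<^sup>+\<omega>. of_nat (pp_count Y A \<omega>) \<partial>M) = ennreal (mu * measure lborel A)"
proof -
  let ?lam = "mu * measure lborel A"
  have lam0: "0 \<le> ?lam" using mu_pos by simp
  have "(\<integral>\<^sup>+\<omega>. of_nat (pp_count Y A \<omega>) \<partial>M)
     = (\<Sum>m. of_nat m * ennreal (?lam ^ m / fact m * exp (- ?lam)))"
    by (rule count_nn_integral[OF assms(1-3)])
  also have "\<dots> = (\<Sum>m. ennreal (real m * (?lam ^ m / fact m * exp (- ?lam))))"
    by (intro arg_cong[where f=suminf] ext, subst ennreal_of_nat_eq_real_of_nat, rule ennreal_mult'[symmetric]) simp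
  also have "\<dots> = ennreal ?lam"
    by (rule suminf_ennreal_eq) (use lam0 poisson_mean_sums in auto)
  finally show ?thesis .
qed

lemma count_laplace_multi:
  fixes k :: nat and A :: "nat \<Rightarrow> complex set"
  assumes A: "\<And>j. j < k \<Longrightarrow> A j \<in> sets borel \<and> A j \<subseteq> S \<and> bounded (A j)" and d: "disjoint_family_on A {..<k}"
    and v: "\<And>j. j < k \<Longrightarrow> 0 \<le> v j"
  shows "(\<integral>\<omega>. exp (- (\<Sum>j<k. v j * real (pp_count Y (A j) \<omega>))) \<partial>M)
       = exp (- (\<Sum>j<k. mu * measure lborel (A j) * (1 - exp (- v j))))"
proof -
  have ind: "indep_vars (\<lambda>_. borel) (\<lambda>j \<omega>. exp (- (v j * real (pp_count Y (A j) \<omega>)))) {..<k}"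
    by (rule indep_vars_compose2[OF count_multi(1)[OF A d]]) (auto intro!: borel_measurable_count_space)
  have rv: "j < k \<Longrightarrow> pp_count Y (A j) \<in> M \<rightarrow>\<^sub>M count_space UNIV" for j
    using count_rv A by blast
  have "(\<integral>\<omega>. exp (- (\<Sum>j<k. v j * real (pp_count Y (A j) \<omega>))) \<partial>M)
      = (\<integral>\<omega>. (\<Prod>j<k. exp (- (v j * real (pp_count Y (A j) \<omega>)))) \<partial>M)"
    by (simp add: exp_sum[symmetric] sum_negf)
  also have "\<dots> = (\<Prod>j<k. \<integral>\<omega>. exp (- (v j * real (pp_count Y (A j) \<omega>))) \<partial>M)"
  proof (rule indep_vars_lebesgue_integral[OF _ ind])
    fix j assume "j \<in> {..<k}"
    then have [measurable]: "pp_count Y (A j) \<in> M \<rightarrow>\<^sub>M count_space UNIV" using rv by simp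
    show "integrable M (\<lambda>\<omega>. exp (- (v j * real (pp_count Y (A j) \<omega>))))"
      by (rule integrable_const_bound[where B=1]) (use v \<open>j \<in> {..<k}\<close> in auto)
  qed simp
  also have "\<dots> = (\<Prod>j<k. exp (- (mu * measure lborel (A j) * (1 - exp (- v j)))))"
    by (rule prod.cong[OF refl]) (use A v count_laplace in auto)
  also have "\<dots> = exp (- (\<Sum>j<k. mu * measure lborel (A j) * (1 - exp (- v j))))"
    by (simp add: exp_sum[symmetric] sum_negf)
  finally show ?thesis .
qed

end

definition ann :: "real \<Rightarrow> real \<Rightarrow> complex set" where
  "ann a b = {z. a \<le> cmod z \<and> cmod z < b}"

lemma ann_borel[measurable]: "ann a b \<in> sets borel"
  unfolding ann_def by measurable

lemma ann_bounded: "bounded (ann a b)"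
  unfolding ann_def bounded_iff by (intro exI[of _ b]) auto

lemma ann_eq: "0 \<le> a \<Longrightarrow> ann a b = ball 0 b - ball 0 a"
  by (auto simp: ann_def)

lemma emeasure_ball_complex: "0 \<le> r \<Longrightarrow> emeasure lborel (ball (0::complex) r) = ennreal (pi * r\<^sup>2)"
  using emeasure_ball[where c="0::complex" and r=r] by (simp add: unit_ball_vol_2 mult.commute)

lemma measure_ann: assumes "0 \<le> a" "a \<le> b" shows "measure lborel (ann a b) = pi * (b\<^sup>2 - a\<^sup>2)"
proof -
  have "measure lborel (ball (0::complex) b - ball 0 a) = measure lborel (ball (0::complex) b) - measure lborel (ball (0::complex) a)"
    by (rule measure_Diff) (use assms emeasure_ball_complex[of b] in auto)
  also have "\<dots> = pi * b\<^sup>2 - pi * a\<^sup>2"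
    using assms emeasure_ball_complex[of a] emeasure_ball_complex[of b]
    by (simp add: measure_def)
  finally show ?thesis using assms by (simp add: ann_eq right_diff_distrib)
qed

lemma ennreal_suminf_swap:
  fixes g :: "nat \<Rightarrow> nat \<Rightarrow> ennreal"
  shows "(\<Sum>n. \<Sum>k. g n k) = (\<Sum>k. \<Sum>n. g n k)"
proof -
  have "(\<Sum>n. \<Sum>k. g n k) = (\<integral>\<^sup>+n. (\<Sum>k. g n k) \<partial>count_space UNIV)"
    by (simp add: nn_integral_count_space_nat)
  also have "\<dots> = (\<Sum>k. \<integral>\<^sup>+n. g n k \<partial>count_space UNIV)"
    by (rule nn_integral_suminf) simp
  also have "\<dots> = (\<Sum>k. \<Sum>n. g n k)"
    by (simp add: nn_integral_count_space_nat)
  finally show ?thesis .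
qed

lemma ennreal_le_suminf: "(f k :: ennreal) \<le> (\<Sum>i. f i)"
proof -
  have "sum f {k} \<le> suminf f" by (rule sum_le_suminf) auto
  then show ?thesis by simp
qed

lemma ennreal_suminf_indicator_finite:
  assumes "finite {n. P n}"
  shows "(\<Sum>n. c * indicator {n. P n} n) = (c :: ennreal) * of_nat (card {n. P n})"
proof -
  have "(\<Sum>n. c * indicator {n. P n} n) = (\<Sum>n\<in>{n. P n}. c * indicator {n. P n} n)"
    by (rule suminf_finite[OF assms]) auto
  also have "\<dots> = (\<Sum>n\<in>{n. P n}. c)" by simp
  finally show ?thesis by (simp add: mult.commute)
qed

lemma ennreal_suminf_indicator_finite1:
  assumes "finite {n. P n}"
  shows "(\<Sum>n. indicator {n. P n} n :: ennreal) = of_nat (card {n. P n})"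
  using ennreal_suminf_indicator_finite[OF assms, of 1] by simp

locale ppp2 = ppp +
  fixes D1 :: real
  assumes D1pos: "0 < D1" and S_eq: "S = {y. D1 \<le> cmod y}"
begin

lemma ann_sub_S: "D1 \<le> a \<Longrightarrow> ann a b \<subseteq> S"
  by (auto simp: ann_def S_eq)

lemma ann_props: "D1 \<le> a \<Longrightarrow> ann a b \<in> sets borel \<and> ann a b \<subseteq> S \<and> bounded (ann a b)"
  using ann_sub_S ann_bounded by simp

lemma count_meas_ennreal:
  assumes "D1 \<le> a"
  shows "(\<lambda>\<omega>. of_nat (pp_count Y (ann a b) \<omega>) :: ennreal) \<in> borel_measurable M"
  using measurable_compose[OF count_rv[of "ann a b"] borel_measurable_count_space] ann_props[OF assms]
  by (simp add: comp_def)

lemma summable_shift_powr: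
  assumes "s < -1" "0 < d"
  shows "summable (\<lambda>k::nat. (d + real k) powr s)"
proof (rule summable_comparison_test_ev)
  show "summable (\<lambda>k::nat. real k powr s)" using assms by (simp add: summable_real_powr_iff)
  show "\<forall>\<^sub>F k in sequentially. norm ((d + real k) powr s) \<le> real k powr s"
    using eventually_ge_at_top[of "1::nat"]
  proof eventually_elim
    case (elim k)
    then have "real k \<le> d + real k" "0 < real k" using assms by auto
    then show ?case using assms by (simp add: powr_mono2')
  qed
qed

lemma AE_summable:
  assumes alpha: "2 < \<alpha>"
  shows "AE \<omega> in M. summable (\<lambda>n. cmod (Y n \<omega>) powr (-\<alpha>))"
proof -
  define c where "c k = (D1 + real k) powr (-\<alpha>)" for k :: nat
  define B where "B k = ann (D1 + real k) (D1 + real k + 1)" for k :: nat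
  have Bp: "B k \<in> sets borel \<and> B k \<subseteq> S \<and> bounded (B k)" for k
    unfolding B_def by (rule ann_props) simp
  have Bmeas[measurable]: "(\<lambda>\<omega>. of_nat (pp_count Y (B k) \<omega>) :: ennreal) \<in> borel_measurable M" for k
    unfolding B_def by (rule count_meas_ennreal) simp
  have c0: "0 \<le> c k" for k unfolding c_def by simp
  have good: "AE \<omega> in M. (\<forall>n. Y n \<omega> \<in> S) \<and> (\<forall>k. finite {n. Y n \<omega> \<in> B k})"
    using AE_in_S AE_finite Bp by (simp add: AE_all_countable)
  have bound: "AE \<omega> in M. (\<Sum>n. ennreal (cmod (Y n \<omega>) powr (-\<alpha>))) \<le> (\<Sum>k. ennreal (c k) * of_nat (pp_count Y (B k) \<omega>))"
    using good
  proof eventually_elim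
    case (elim \<omega>)
    have pt: "ennreal (cmod (Y n \<omega>) powr (-\<alpha>)) \<le> (\<Sum>k. ennreal (c k) * indicator {n. Y n \<omega> \<in> B k} n)" for n
    proof -
      define t where "t = cmod (Y n \<omega>)"
      have tD: "D1 \<le> t" using elim by (auto simp: S_eq t_def)
      define k0 where "k0 = nat \<lfloor>t - D1\<rfloor>"
      have k0: "D1 + real k0 \<le> t" "t < D1 + real k0 + 1"
        using tD unfolding k0_def by linarith+
      then have inB: "Y n \<omega> \<in> B k0" by (simp add: B_def ann_def t_def)
      have "t powr (-\<alpha>) \<le> c k0" unfolding c_def
        using k0 D1pos alpha by (intro powr_mono2') auto
      then have "ennreal (t powr (-\<alpha>)) \<le> ennreal (c k0) * indicator {n. Y n \<omega> \<in> B k0} n"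
        using inB by (simp add: ennreal_leI)
      also have "\<dots> \<le> (\<Sum>k. ennreal (c k) * indicator {n. Y n \<omega> \<in> B k} n)"
        by (rule ennreal_le_suminf)
      finally show ?thesis by (simp add: t_def)
    qed
    have "(\<Sum>n. ennreal (cmod (Y n \<omega>) powr (-\<alpha>))) \<le> (\<Sum>n. \<Sum>k. ennreal (c k) * indicator {n. Y n \<omega> \<in> B k} n)"
      by (rule suminf_le) (use pt in auto)
    also have "\<dots> = (\<Sum>k. \<Sum>n. ennreal (c k) * indicator {n. Y n \<omega> \<in> B k} n)"
      by (rule ennreal_suminf_swap)
    also have "\<dots> = (\<Sum>k. ennreal (c k) * of_nat (pp_count Y (B k) \<omega>))"
      using elim by (simp add: ennreal_suminf_indicator_finite1 pp_count_def)
    finally show ?case .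
  qed
  have "(\<integral>\<^sup>+\<omega>. (\<Sum>n. ennreal (cmod (Y n \<omega>) powr (-\<alpha>))) \<partial>M) \<le> (\<integral>\<^sup>+\<omega>. (\<Sum>k. ennreal (c k) * of_nat (pp_count Y (B k) \<omega>)) \<partial>M)"
    by (rule nn_integral_mono_AE[OF bound])
  also have "\<dots> = (\<Sum>k. \<integral>\<^sup>+\<omega>. ennreal (c k) * of_nat (pp_count Y (B k) \<omega>) \<partial>M)"
    by (rule nn_integral_suminf) simp
  also have "\<dots> = (\<Sum>k. ennreal (c k) * ennreal (mu * measure lborel (B k)))"
    using Bp by (simp add: nn_integral_cmult count_mean)
  also have "\<dots> = (\<Sum>k. ennreal (c k * (mu * (pi * ((D1 + real k + 1)\<^sup>2 - (D1 + real k)\<^sup>2)))))"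
  proof (intro arg_cong[where f=suminf] ext)
    fix k
    have "measure lborel (B k) = pi * ((D1 + real k + 1)\<^sup>2 - (D1 + real k)\<^sup>2)"
      unfolding B_def using D1pos by (intro measure_ann) auto
    then show "ennreal (c k) * ennreal (mu * measure lborel (B k)) = ennreal (c k * (mu * (pi * ((D1 + real k + 1)\<^sup>2 - (D1 + real k)\<^sup>2))))"
      using c0 by (simp add: ennreal_mult')
  qed
  also have "\<dots> < \<infinity>"
  proof -
    let ?g = "\<lambda>k::nat. mu * pi * (2 + 1 / D1) * (D1 + real k) powr (1 - \<alpha>)"
    have sg: "summable ?g"
      by (intro summable_mult summable_shift_powr) (use alpha D1pos in auto)
    have le: "c k * (mu * (pi * ((D1 + real k + 1)\<^sup>2 - (D1 + real k)\<^sup>2))) \<le> ?g k" for k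
    proof -
      have dk: "0 < D1 + real k" using D1pos by simp
      have "(D1 + real k + 1)\<^sup>2 - (D1 + real k)\<^sup>2 = 2 * (D1 + real k) + 1" by (simp add: power2_eq_square algebra_simps)
      also have "\<dots> \<le> (2 + 1 / D1) * (D1 + real k)"
      proof -
        have "1 \<le> (D1 + real k) / D1" using D1pos by (simp add: field_simps)
        then show ?thesis using D1pos by (simp add: algebra_simps)
      qed
      finally have q: "(D1 + real k + 1)\<^sup>2 - (D1 + real k)\<^sup>2 \<le> (2 + 1 / D1) * (D1 + real k)" .
      have "c k * (mu * (pi * ((D1 + real k + 1)\<^sup>2 - (D1 + real k)\<^sup>2))) \<le> c k * (mu * (pi * ((2 + 1 / D1) * (D1 + real k))))"
        using q c0 mu_pos by (intro mult_left_mono) auto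
      also have "\<dots> = mu * pi * (2 + 1 / D1) * (c k * (D1 + real k))" by (simp add: algebra_simps)
      also have "c k * (D1 + real k) = (D1 + real k) powr (1 - \<alpha>)"
      proof -
        have "c k * (D1 + real k) = (D1 + real k) powr (-\<alpha>) * (D1 + real k) powr 1" using dk by (simp add: c_def)
        also have "\<dots> = (D1 + real k) powr (-\<alpha> + 1)" by (simp only: powr_add)
        finally show ?thesis by simp
      qed
      finally show ?thesis by simp
    qed
    have nn: "0 \<le> c k * (mu * (pi * ((D1 + real k + 1)\<^sup>2 - (D1 + real k)\<^sup>2)))" for k
      using c0 mu_pos D1pos by (intro mult_nonneg_nonneg) (auto intro!: power_mono)
    have "summable (\<lambda>k. c k * (mu * (pi * ((D1 + real k + 1)\<^sup>2 - (D1 + real k)\<^sup>2))))"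
      by (rule summable_comparison_test[OF _ sg]) (use le nn in auto)
    then show ?thesis using nn by (simp add: ennreal_suminf_neq_top less_top)
  qed
  finally have fin: "(\<integral>\<^sup>+\<omega>. (\<Sum>n. ennreal (cmod (Y n \<omega>) powr (-\<alpha>))) \<partial>M) \<noteq> \<infinity>" by simp
  have "AE \<omega> in M. (\<Sum>n. ennreal (cmod (Y n \<omega>) powr (-\<alpha>))) \<noteq> \<infinity>"
    by (rule nn_integral_PInf_AE[OF _ fin]) simp
  then show ?thesis
    by eventually_elim (rule summable_suminf_not_top, auto)
qed

end

lemma powr_set_integrable:
  fixes d s :: real
  assumes d: "0 < d" and s: "s < -1"
  shows "set_integrable lborel {d..} (\<lambda>t. t powr s)"
proof -
  let ?F = "\<lambda>t::real. t powr (s+1) / (s+1)"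
  have "set_integrable lborel (einterval (ereal (d/2)) \<infinity>) (\<lambda>t. t powr s)"
  proof (rule interval_integral_FTC_nonneg(1)[where F="?F" and A="?F (d/2)" and B=0])
    show "ereal (d/2) < \<infinity>" by simp
  next
    fix x assume "ereal (d/2) < ereal x" "ereal x < \<infinity>"
    then have x: "0 < x" using d by simp
    have "(?F has_real_derivative ((s+1) * x powr (s + 1 - 1)) / (s+1)) (at x)"
      by (intro DERIV_cdivide has_real_derivative_powr x)
    moreover have "((s+1) * x powr (s + 1 - 1)) / (s+1) = x powr s" using s by simp
    ultimately show "(?F has_real_derivative x powr s) (at x)" by simp
    show "isCont (\<lambda>t. t powr s) x" using x by (intro continuous_intros) auto
  next
    show "AE x in lborel. ereal (d/2) < ereal x \<longrightarrow> ereal x < \<infinity> \<longrightarrow> 0 \<le> x powr s" by simp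
  next
    have "(?F \<longlongrightarrow> ?F (d/2)) (at (d/2))"
      using d s by (intro tendsto_intros) auto
    then have "(?F \<longlongrightarrow> ?F (d/2)) (at_right (d/2))"
      by (rule tendsto_mono[rotated]) (simp add: at_le)
    then show "((?F \<circ> real_of_ereal) \<longlongrightarrow> ?F (d/2)) (at_right (ereal (d/2)))"
      by (simp add: ereal_tendsto_simps)
  next
    have "((\<lambda>t. t powr (s+1)) \<longlongrightarrow> 0) at_top"
      using s by (intro tendsto_neg_powr filterlim_ident) auto
    then have "(?F \<longlongrightarrow> 0) at_top" by (intro tendsto_divide_zero)
    then show "((?F \<circ> real_of_ereal) \<longlongrightarrow> 0) (at_left \<infinity>)"
      by (simp add: ereal_tendsto_simps)
  qed
  then show ?thesis
    by (rule set_integrable_subset) (use d in \<open>auto simp: einterval_def\<close>)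
qed

lemma integral_t_Ico:
  fixes a b :: real
  assumes ab: "a \<le> b"
  shows "(\<integral>t. t * indicator {a..<b} t \<partial>lborel) = (b\<^sup>2 - a\<^sup>2) / 2"
    and "integrable lborel (\<lambda>t. t * indicator {a..<b} t)"
proof -
  have ae: "AE t in lborel. t * indicator {a..<b} t = indicator {a..b} t *\<^sub>R t"
    using AE_lborel_singleton[of b] by eventually_elim (auto split: split_indicator)
  have "(\<integral>t. indicator {a..b} t *\<^sub>R t \<partial>lborel) = b\<^sup>2/2 - a\<^sup>2/2"
  proof (rule integral_FTC_atLeastAtMost[OF ab])
    fix x assume "a \<le> x" "x \<le> b"
    have "((\<lambda>t. t\<^sup>2/2) has_real_derivative x) (at x within {a..b})"
      by (auto intro!: derivative_eq_intros simp: power2_eq_square)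
    then show "((\<lambda>t. t\<^sup>2/2) has_vector_derivative x) (at x within {a..b})"
      by (simp add: has_real_derivative_iff_has_vector_derivative)
  qed (intro continuous_intros)
  then show "(\<integral>t. t * indicator {a..<b} t \<partial>lborel) = (b\<^sup>2 - a\<^sup>2) / 2"
    using integral_cong_AE[OF _ _ ae] by (simp add: diff_divide_distrib)
  have "integrable lborel (\<lambda>t. t * indicator {a..b} t)"
    by (rule borel_integrable_atLeastAtMost) simp
  then show "integrable lborel (\<lambda>t. t * indicator {a..<b} t)"
    by (rule integrable_cong_AE[THEN iffD1, rotated -1]) (use AE_lborel_singleton[of b] in \<open>auto elim!: eventually_mono split: split_indicator\<close>)
qed

definition gp :: "real \<Rightarrow> nat \<Rightarrow> nat \<Rightarrow> real" where "gp D m j = D + real j / real (Suc m)"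
definition cell :: "real \<Rightarrow> nat \<Rightarrow> nat \<Rightarrow> real set" where "cell D m j = {gp D m j ..< gp D m (Suc j)}"
definition ncell :: "nat \<Rightarrow> nat" where "ncell m = m * Suc m"
definition cidx :: "real \<Rightarrow> nat \<Rightarrow> real \<Rightarrow> nat" where "cidx D m t = nat \<lfloor>(t - D) * real (Suc m)\<rfloor>"

lemma cell_iff: "t \<in> cell D m j \<longleftrightarrow> D \<le> t \<and> j = cidx D m t"
proof -
  have pos: "0 < real (Suc m)" by simp
  have "t \<in> cell D m j \<longleftrightarrow> real j \<le> (t - D) * real (Suc m) \<and> (t - D) * real (Suc m) < real j + 1"
    unfolding cell_def gp_def using pos by (auto simp: field_simps)
  also have "\<dots> \<longleftrightarrow> D \<le> t \<and> j = cidx D m t"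
  proof
    assume h: "real j \<le> (t - D) * real (Suc m) \<and> (t - D) * real (Suc m) < real j + 1"
    then have "0 \<le> (t - D) * real (Suc m)" by linarith
    then have "D \<le> t" using pos by (simp add: zero_le_mult_iff)
    moreover have "\<lfloor>(t - D) * real (Suc m)\<rfloor> = int j" using h by (simp add: floor_eq_iff)
    ultimately show "D \<le> t \<and> j = cidx D m t" by (simp add: cidx_def)
  next
    assume h: "D \<le> t \<and> j = cidx D m t"
    then have "0 \<le> (t - D) * real (Suc m)" by simp
    then have "\<lfloor>(t - D) * real (Suc m)\<rfloor> = int j" using h by (simp add: cidx_def)
    then show "real j \<le> (t - D) * real (Suc m) \<and> (t - D) * real (Suc m) < real j + 1"
      by (simp add: floor_eq_iff)
  qed
  finally show ?thesis .
qed

lemma cidx_in: "D \<le> t \<Longrightarrow> t \<in> cell D m (cidx D m t)"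
  by (simp add: cell_iff)

lemma cidx_lt: assumes "D \<le> t" "t < D + real m" shows "cidx D m t < ncell m"
proof -
  have "(t - D) * real (Suc m) < real m * real (Suc m)"
    using assms by (intro mult_strict_right_mono) auto
  moreover have "(of_int (int (m * Suc m)) :: real) = real m * real (Suc m)" by (simp add: algebra_simps)
  ultimately have "(t - D) * real (Suc m) < of_int (int (m * Suc m))" by linarith
  then have "\<lfloor>(t - D) * real (Suc m)\<rfloor> < int (m * Suc m)" by (rule floor_less_iff[THEN iffD2])
  then show ?thesis using assms unfolding cidx_def ncell_def by (simp add: nat_less_iff)
qed

lemma gp_ge: "D \<le> gp D m j" by (simp add: gp_def)

lemma gp_le: assumes "j \<le> ncell m" shows "gp D m j \<le> D + real m"
proof -
  have "real j \<le> real m * real (Suc m)" using assms unfolding ncell_def by (metis of_nat_le_iff of_nat_mult)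
  then have "real j / real (Suc m) \<le> real m" by (simp add: divide_le_eq)
  then show ?thesis by (simp add: gp_def)
qed

lemma gp_Suc: "gp D m (Suc j) = gp D m j + 1 / real (Suc m)"
  by (simp add: gp_def add_divide_distrib)

lemma gp_mono: "j \<le> k \<Longrightarrow> gp D m j \<le> gp D m k"
  by (simp add: gp_def divide_right_mono)

lemma cell_right: assumes "t \<in> cell D m j" shows "t < gp D m (Suc j)" "gp D m (Suc j) \<le> t + 1 / real (Suc m)"
  using assms by (auto simp: cell_def gp_Suc)

lemma sum_cell:
  "(\<Sum>j<ncell m. f j * indicator (cell D m j) t) = (if D \<le> t \<and> cidx D m t < ncell m then f (cidx D m t) else (0::real))"
proof -
  have "(\<Sum>j<ncell m. f j * indicator (cell D m j) t) = (\<Sum>j<ncell m. if j = cidx D m t then (if D \<le> t then f j else 0) else 0)"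
    by (intro sum.cong refl) (auto simp: indicator_def cell_iff)
  also have "\<dots> = (if D \<le> t \<and> cidx D m t < ncell m then f (cidx D m t) else 0)"
    by (subst sum.delta) auto
  finally show ?thesis .
qed

lemma cell_disjoint: "j \<noteq> k \<Longrightarrow> cell D m j \<inter> cell D m k = {}"
  by (auto simp: cell_iff)

definition psim :: "(real \<Rightarrow> real) \<Rightarrow> real \<Rightarrow> nat \<Rightarrow> real \<Rightarrow> real" where
  "psim psi D m t = (\<Sum>j<ncell m. psi (gp D m (Suc j)) * indicator (cell D m j) t)"

lemma psim_eq: "psim psi D m t = (if D \<le> t \<and> cidx D m t < ncell m then psi (gp D m (Suc (cidx D m t))) else 0)"
  unfolding psim_def by (rule sum_cell)

lemma psim_bounds:
  assumes nn: "\<And>t. D \<le> t \<Longrightarrow> 0 \<le> psi t" and mono: "\<And>s t. D \<le> s \<Longrightarrow> s \<le> t \<Longrightarrow> psi t \<le> psi s"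
    and t: "D \<le> t"
  shows "0 \<le> psim psi D m t" "psim psi D m t \<le> psi t"
proof -
  have r: "t < gp D m (Suc (cidx D m t))" using cell_right(1)[OF cidx_in[OF t]] .
  show "0 \<le> psim psi D m t" using nn gp_ge by (simp add: psim_eq)
  show "psim psi D m t \<le> psi t" using mono[OF t] r nn[OF t] by (simp add: psim_eq)
qed

lemma psim_nonneg:
  assumes nn: "\<And>t. D \<le> t \<Longrightarrow> 0 \<le> psi t"
  shows "0 \<le> psim psi D m t"
  using nn gp_ge by (simp add: psim_eq)

lemma psim_tendsto:
  assumes cont: "continuous_on {D..} psi" and t: "D \<le> t"
  shows "(\<lambda>m. psim psi D m t) \<longlonglongrightarrow> psi t"
proof -
  define r where "r m = gp D m (Suc (cidx D m t))" for m
  have r1: "t < r m" "r m \<le> t + 1 / real (Suc m)" for m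
    using cell_right[OF cidx_in[OF t]] by (auto simp: r_def)
  have i0: "(\<lambda>m. 1 / real (Suc m)) \<longlonglongrightarrow> 0"
    using LIMSEQ_inverse_real_of_nat unfolding inverse_eq_divide .
  have up: "(\<lambda>m. t + 1 / real (Suc m)) \<longlonglongrightarrow> t"
    using tendsto_add[OF tendsto_const[of t] i0] by simp
  have lo: "((\<lambda>_. t) \<longlongrightarrow> t) sequentially" by (rule tendsto_const)
  have e1: "\<forall>\<^sub>F n in sequentially. t \<le> r n"
    by (rule always_eventually) (use r1(1) in \<open>simp add: less_imp_le\<close>)
  have e2: "\<forall>\<^sub>F n in sequentially. r n \<le> t + 1 / real (Suc n)"
    by (rule always_eventually) (use r1(2) in simp)
  have rt: "r \<longlonglongrightarrow> t" by (rule tendsto_sandwich[OF e1 e2 lo up])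
  have rin: "\<forall>\<^sub>F m in sequentially. r m \<in> {D..}"
  proof -
    have "r m \<in> {D..}" for m using r1(1)[of m] t by simp
    then show ?thesis by (intro always_eventually) simp
  qed
  have lim: "(\<lambda>m. psi (r m)) \<longlonglongrightarrow> psi t"
    by (rule continuous_on_tendsto_compose[OF cont rt _ rin]) (use t in simp)
  obtain N :: nat where N: "t - D < real N" using reals_Archimedean2 by blast
  have ev: "\<forall>\<^sub>F m in sequentially. psi (r m) = psim psi D m t"
  proof (rule eventually_sequentiallyI[of N])
    fix m assume "N \<le> m"
    then have "t < D + real m" using N by linarith
    then have "cidx D m t < ncell m" using cidx_lt t by blast
    then show "psi (r m) = psim psi D m t" using t by (simp add: psim_eq r_def)
  qed
  show ?thesis by (rule Lim_transform_eventually[OF lim ev])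
qed

lemma psim_measurable[measurable]: "psim psi D m \<in> borel_measurable borel"
  unfolding psim_def cell_def by measurable

lemma integral_psim:
  assumes D: "0 < D"
  shows "(LBINT t:{D..}. (1 - exp (- psim psi D m t)) * t)
       = (\<Sum>j<ncell m. (1 - exp (- psi (gp D m (Suc j)))) * ((gp D m (Suc j))\<^sup>2 - (gp D m j)\<^sup>2) / 2)"
proof -
  let ?v = "\<lambda>j. psi (gp D m (Suc j))"
  have pt: "indicator {D..} t *\<^sub>R ((1 - exp (- psim psi D m t)) * t)
        = (\<Sum>j<ncell m. (1 - exp (- ?v j)) * (t * indicator (cell D m j) t))" for t
  proof -
    have "(\<Sum>j<ncell m. (1 - exp (- ?v j)) * (t * indicator (cell D m j) t))
        = (\<Sum>j<ncell m. ((1 - exp (- ?v j)) * t) * indicator (cell D m j) t)"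
      by (simp add: mult.assoc)
    also have "\<dots> = (if D \<le> t \<and> cidx D m t < ncell m then (1 - exp (- ?v (cidx D m t))) * t else 0)"
      by (rule sum_cell)
    finally show ?thesis by (simp add: psim_eq indicator_def)
  qed
  have "(LBINT t:{D..}. (1 - exp (- psim psi D m t)) * t)
      = (\<integral>t. (\<Sum>j<ncell m. (1 - exp (- ?v j)) * (t * indicator (cell D m j) t)) \<partial>lborel)"
    unfolding set_lebesgue_integral_def using pt by simp
  also have "\<dots> = (\<Sum>j<ncell m. \<integral>t. (1 - exp (- ?v j)) * (t * indicator (cell D m j) t) \<partial>lborel)"
    by (rule Bochner_Integration.integral_sum) (auto simp: cell_def gp_mono intro!: integral_t_Ico(2))
  also have "\<dots> = (\<Sum>j<ncell m. (1 - exp (- ?v j)) * ((gp D m (Suc j))\<^sup>2 - (gp D m j)\<^sup>2) / 2)"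
  proof (rule sum.cong[OF refl])
    fix j
    have "(\<integral>t. (1 - exp (- ?v j)) * (t * indicator (cell D m j) t) \<partial>lborel)
        = (1 - exp (- ?v j)) * (\<integral>t. t * indicator (cell D m j) t \<partial>lborel)"
      by (rule integral_mult_right_zero)
    also have "(\<integral>t. t * indicator (cell D m j) t \<partial>lborel) = ((gp D m (Suc j))\<^sup>2 - (gp D m j)\<^sup>2) / 2"
      unfolding cell_def by (rule integral_t_Ico(1)) (simp add: gp_mono)
    finally show "(\<integral>t. (1 - exp (- ?v j)) * (t * indicator (cell D m j) t) \<partial>lborel)
        = (1 - exp (- ?v j)) * ((gp D m (Suc j))\<^sup>2 - (gp D m j)\<^sup>2) / 2" by simp
  qed
  finally show ?thesis .
qed

lemma one_minus_exp_le: "0 \<le> x \<Longrightarrow> 1 - exp (- x) \<le> (x::real)"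
  using exp_ge_add_one_self[of "-x"] by simp

lemma one_minus_exp_nonneg: "0 \<le> x \<Longrightarrow> 0 \<le> 1 - exp (- (x::real))"
  by simp

lemma powr_times_self: "0 < (t::real) \<Longrightarrow> t powr (-a) * t = t powr (1 - a)"
proof -
  assume t: "0 < t"
  have "t powr (-a) * t = t powr (-a) * t powr 1" using t by (simp add: powr_one)
  also have "\<dots> = t powr (-a + 1)" by (simp only: powr_add)
  finally show ?thesis by simp
qed

lemma integral_psim_tendsto:
  assumes D: "0 < D" and alpha: "2 < \<alpha>" and K: "0 \<le> K"
    and psi_meas[measurable]: "psi \<in> borel_measurable borel"
    and nn: "\<And>t. D \<le> t \<Longrightarrow> 0 \<le> psi t"
    and mono: "\<And>s t. D \<le> s \<Longrightarrow> s \<le> t \<Longrightarrow> psi t \<le> psi s"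
    and cont: "continuous_on {D..} psi"
    and bnd: "\<And>t. D \<le> t \<Longrightarrow> psi t \<le> K * t powr (-\<alpha>)"
  shows "(\<lambda>m. LBINT t:{D..}. (1 - exp (- psim psi D m t)) * t) \<longlonglongrightarrow> (LBINT t:{D..}. (1 - exp (- psi t)) * t)"
  unfolding set_lebesgue_integral_def
proof (rule integral_dominated_convergence[where w="\<lambda>t. K * (indicator {D..} t *\<^sub>R t powr (1 - \<alpha>))"])
  show "integrable lborel (\<lambda>t. K * (indicator {D..} t *\<^sub>R t powr (1 - \<alpha>)))"
    using powr_set_integrable[OF D, of "1 - \<alpha>"] alpha
    by (intro integrable_mult_right) (simp add: set_integrable_def)
  show "AE t in lborel. (\<lambda>m. indicator {D..} t *\<^sub>R ((1 - exp (- psim psi D m t)) * t)) \<longlonglongrightarrow>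
          indicator {D..} t *\<^sub>R ((1 - exp (- psi t)) * t)"
  proof (rule AE_I2)
    fix t :: real
    show "(\<lambda>m. indicator {D..} t *\<^sub>R ((1 - exp (- psim psi D m t)) * t)) \<longlonglongrightarrow>
          indicator {D..} t *\<^sub>R ((1 - exp (- psi t)) * t)"
    proof (cases "D \<le> t")
      case True
      have "(\<lambda>m. psim psi D m t) \<longlonglongrightarrow> psi t" by (rule psim_tendsto[OF cont True])
      then show ?thesis by (intro tendsto_intros)
    next
      case False then show ?thesis by simp
    qed
  qed
  fix m
  show "AE t in lborel. norm (indicator {D..} t *\<^sub>R ((1 - exp (- psim psi D m t)) * t)) \<le> K * (indicator {D..} t *\<^sub>R t powr (1 - \<alpha>))"
  proof (rule AE_I2)
    fix t :: real
    show "norm (indicator {D..} t *\<^sub>R ((1 - exp (- psim psi D m t)) * t)) \<le> K * (indicator {D..} t *\<^sub>R t powr (1 - \<alpha>))"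
    proof (cases "D \<le> t")
      case True
      have t0: "0 < t" using D True by simp
      have p0: "0 \<le> psim psi D m t" and p1: "psim psi D m t \<le> psi t"
        using psim_bounds[OF nn mono True] by auto
      have a: "0 \<le> (1 - exp (- psim psi D m t)) * t" using p0 t0 by simp
      have "(1 - exp (- psim psi D m t)) * t \<le> psim psi D m t * t"
        using one_minus_exp_le[OF p0] t0 by (simp add: mult_right_mono)
      also have "\<dots> \<le> psi t * t" using p1 t0 by (simp add: mult_right_mono)
      also have "\<dots> \<le> K * t powr (-\<alpha>) * t" using bnd[OF True] t0 by (simp add: mult_right_mono)
      also have "\<dots> = K * t powr (1 - \<alpha>)" using powr_times_self[OF t0, of \<alpha>] by (simp add: mult.assoc)
      finally show ?thesis using a True by simp
    next
      case False then show ?thesis by simp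
    qed
  qed
qed measurable

context ppp2
begin

definition Am :: "nat \<Rightarrow> nat \<Rightarrow> complex set" where
  "Am m j = ann (gp D1 m j) (gp D1 m (Suc j))"

lemma Am_iff: "z \<in> Am m j \<longleftrightarrow> cmod z \<in> cell D1 m j"
  by (simp add: Am_def ann_def cell_def)

lemma Am_props: "Am m j \<in> sets borel \<and> Am m j \<subseteq> S \<and> bounded (Am m j)"
  unfolding Am_def by (rule ann_props) (simp add: gp_ge)

lemma Am_disj: "disjoint_family_on (Am m) {..<ncell m}"
  unfolding disjoint_family_on_def by (auto simp: Am_iff cell_iff)

lemma Am_measure: "measure lborel (Am m j) = pi * ((gp D1 m (Suc j))\<^sup>2 - (gp D1 m j)\<^sup>2)"
  unfolding Am_def by (rule measure_ann) (use D1pos gp_ge[of D1 m j] in \<open>auto simp: gp_mono\<close>)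

lemma Am_ball: "j < ncell m \<Longrightarrow> Am m j \<subseteq> ball 0 (D1 + real m + 1)"
proof
  fix z assume j: "j < ncell m" and z: "z \<in> Am m j"
  have "cmod z < gp D1 m (Suc j)" using z by (simp add: Am_iff cell_def)
  also have "\<dots> \<le> D1 + real m" using j by (intro gp_le) simp
  finally show "z \<in> ball 0 (D1 + real m + 1)" by simp
qed

definition goodY :: "real \<Rightarrow> 'a \<Rightarrow> bool" where
  "goodY \<alpha> \<omega> \<longleftrightarrow> (\<forall>n. Y n \<omega> \<in> S) \<and> (\<forall>m::nat. finite {n. Y n \<omega> \<in> ball 0 (D1 + real m + 1)})
      \<and> summable (\<lambda>n. cmod (Y n \<omega>) powr (-\<alpha>))"

lemma AE_goodY: "2 < (\<alpha>::real) \<Longrightarrow> AE \<omega> in M. goodY \<alpha> \<omega>"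
proof -
  assume a: "2 < \<alpha>"
  have f: "AE \<omega> in M. finite {n. Y n \<omega> \<in> ball 0 (D1 + real m + 1)}" for m
    by (rule AE_finite) auto
  have "AE \<omega> in M. \<forall>m::nat. finite {n. Y n \<omega> \<in> ball 0 (D1 + real m + 1)}"
    using f by (simp only: AE_all_countable) blast
  then show ?thesis unfolding goodY_def using AE_in_S AE_summable[OF a]
    by eventually_elim auto
qed

lemma sum_psim_counts:
  fixes \<alpha> :: real
  assumes g: "goodY \<alpha> \<omega>"
  shows "(\<Sum>n. psim psi D1 m (cmod (Y n \<omega>))) = (\<Sum>j<ncell m. psi (gp D1 m (Suc j)) * real (pp_count Y (Am m j) \<omega>))"
proof -
  let ?v = "\<lambda>j. psi (gp D1 m (Suc j))"
  have fin: "finite {n. Y n \<omega> \<in> Am m j}" if "j < ncell m" for j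
  proof (rule finite_subset)
    show "{n. Y n \<omega> \<in> Am m j} \<subseteq> {n. Y n \<omega> \<in> ball 0 (D1 + real m + 1)}" using Am_ball[OF that] by auto
    show "finite {n. Y n \<omega> \<in> ball 0 (D1 + real m + 1)}" using g by (simp add: goodY_def)
  qed
  have "(\<Sum>n. psim psi D1 m (cmod (Y n \<omega>))) = (\<Sum>n. \<Sum>j<ncell m. ?v j * indicator {n. Y n \<omega> \<in> Am m j} n)"
    by (intro arg_cong[where f=suminf] ext) (simp add: psim_def indicator_def Am_iff)
  also have "\<dots> = (\<Sum>j<ncell m. \<Sum>n. ?v j * indicator {n. Y n \<omega> \<in> Am m j} n)"
  proof (rule suminf_sum)
    fix j assume "j \<in> {..<ncell m}"
    then show "summable (\<lambda>n. ?v j * indicator {n. Y n \<omega> \<in> Am m j} n)"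
      using fin by (intro summable_finite[of "{n. Y n \<omega> \<in> Am m j}"]) auto
  qed
  also have "\<dots> = (\<Sum>j<ncell m. ?v j * real (pp_count Y (Am m j) \<omega>))"
  proof (rule sum.cong[OF refl])
    fix j assume "j \<in> {..<ncell m}"
    then have f: "finite {n. Y n \<omega> \<in> Am m j}" using fin by simp
    have "(\<Sum>n. ?v j * indicator {n. Y n \<omega> \<in> Am m j} n) = (\<Sum>n\<in>{n. Y n \<omega> \<in> Am m j}. ?v j * indicator {n. Y n \<omega> \<in> Am m j} n)"
      by (rule suminf_finite[OF f]) auto
    also have "\<dots> = ?v j * real (pp_count Y (Am m j) \<omega>)" by (simp add: pp_count_def)
    finally show "(\<Sum>n. ?v j * indicator {n. Y n \<omega> \<in> Am m j} n) = ?v j * real (pp_count Y (Am m j) \<omega>)" .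
  qed
  finally show ?thesis .
qed

lemma pgfl_m:
  fixes \<alpha> :: real
  assumes alpha: "2 < \<alpha>" and nn: "\<And>t. D1 \<le> t \<Longrightarrow> 0 \<le> psi t"
  shows "(\<integral>\<omega>. exp (- (\<Sum>n. psim psi D1 m (cmod (Y n \<omega>)))) \<partial>M)
       = exp (- (2 * pi * mu * (LBINT t:{D1..}. (1 - exp (- psim psi D1 m t)) * t)))"
proof -
  let ?v = "\<lambda>j. psi (gp D1 m (Suc j))"
  have rv[measurable]: "(\<lambda>\<omega>. real (pp_count Y (Am m j) \<omega>)) \<in> borel_measurable M" for j
    using measurable_compose[OF count_rv[of "Am m j"] borel_measurable_count_space] Am_props
    by (simp add: comp_def)
  have "(\<integral>\<omega>. exp (- (\<Sum>n. psim psi D1 m (cmod (Y n \<omega>)))) \<partial>M)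
      = (\<integral>\<omega>. exp (- (\<Sum>j<ncell m. ?v j * real (pp_count Y (Am m j) \<omega>))) \<partial>M)"
  proof (rule integral_cong_AE)
    show "AE \<omega> in M. exp (- (\<Sum>n. psim psi D1 m (cmod (Y n \<omega>)))) = exp (- (\<Sum>j<ncell m. ?v j * real (pp_count Y (Am m j) \<omega>)))"
      using AE_goodY[OF alpha] by eventually_elim (simp add: sum_psim_counts)
  qed measurable
  also have "\<dots> = exp (- (\<Sum>j<ncell m. mu * measure lborel (Am m j) * (1 - exp (- ?v j))))"
    by (rule count_laplace_multi) (use Am_props Am_disj nn gp_ge in auto)
  also have "(\<Sum>j<ncell m. mu * measure lborel (Am m j) * (1 - exp (- ?v j)))
     = 2 * pi * mu * (\<Sum>j<ncell m. (1 - exp (- ?v j)) * ((gp D1 m (Suc j))\<^sup>2 - (gp D1 m j)\<^sup>2) / 2)"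
    unfolding sum_distrib_left by (intro sum.cong refl) (simp add: Am_measure field_simps)
  also have "(\<Sum>j<ncell m. (1 - exp (- ?v j)) * ((gp D1 m (Suc j))\<^sup>2 - (gp D1 m j)\<^sup>2) / 2)
     = (LBINT t:{D1..}. (1 - exp (- psim psi D1 m t)) * t)"
    by (rule integral_psim[symmetric]) (rule D1pos)
  finally show ?thesis .
qed

end

context ppp2
begin



lemma pgfl:
  fixes \<alpha> K :: real and psi :: "real \<Rightarrow> real"
  assumes alpha: "2 < \<alpha>" and K: "0 \<le> K"
    and psi_meas[measurable]: "psi \<in> borel_measurable borel"
    and nn: "\<And>t. D1 \<le> t \<Longrightarrow> 0 \<le> psi t"
    and mono: "\<And>s t. D1 \<le> s \<Longrightarrow> s \<le> t \<Longrightarrow> psi t \<le> psi s"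
    and cont: "continuous_on {D1..} psi"
    and bnd: "\<And>t. D1 \<le> t \<Longrightarrow> psi t \<le> K * t powr (-\<alpha>)"
  shows "(\<integral>\<omega>. exp (- (\<Sum>n. psi (cmod (Y n \<omega>)))) \<partial>M)
       = exp (- (2 * pi * mu * (LBINT t:{D1..}. (1 - exp (- psi t)) * t)))"
proof -
  have good_facts: "summable (\<lambda>k. psi (cmod (Y k \<omega>)))"
     "\<And>m. summable (\<lambda>k. psim psi D1 m (cmod (Y k \<omega>)))"
     "\<And>k. D1 \<le> cmod (Y k \<omega>)"
    if g: "goodY \<alpha> \<omega>" for \<omega>
  proof -
    show D: "\<And>k. D1 \<le> cmod (Y k \<omega>)" using g unfolding goodY_def by (auto simp: S_eq)
    have "summable (\<lambda>k. K * cmod (Y k \<omega>) powr (-\<alpha>))"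
      using g by (intro summable_mult) (simp add: goodY_def)
    then show s: "summable (\<lambda>k. psi (cmod (Y k \<omega>)))"
      by (rule summable_comparison_test[rotated]) (use nn bnd D in auto)
    fix m
    show "summable (\<lambda>k. psim psi D1 m (cmod (Y k \<omega>)))"
      by (rule summable_comparison_test[OF _ s]) (use psim_bounds[where psi=psi and D=D1, OF nn mono] D in auto)
  qed
  have lhs_lim: "(\<lambda>m. \<integral>\<omega>. exp (- (\<Sum>n. psim psi D1 m (cmod (Y n \<omega>)))) \<partial>M)
      \<longlonglongrightarrow> (\<integral>\<omega>. exp (- (\<Sum>n. psi (cmod (Y n \<omega>)))) \<partial>M)"
  proof (rule integral_dominated_convergence[where w="\<lambda>_. 1"])
    show "AE \<omega> in M. (\<lambda>m. exp (- (\<Sum>n. psim psi D1 m (cmod (Y n \<omega>))))) \<longlonglongrightarrow> exp (- (\<Sum>n. psi (cmod (Y n \<omega>))))"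
      using AE_goodY[OF alpha]
    proof eventually_elim
      case (elim \<omega>)
      note gf = good_facts[OF elim]
      have lim: "\<And>k. (\<lambda>m. psim psi D1 m (cmod (Y k \<omega>))) \<longlonglongrightarrow> psi (cmod (Y k \<omega>))"
        using psim_tendsto[OF cont] gf(3) by blast
      have bound: "eventually (\<lambda>(k, m). norm (psim psi D1 m (cmod (Y k \<omega>))) \<le> psi (cmod (Y k \<omega>))) (at_top \<times>\<^sub>F sequentially)"
      proof (rule always_eventually, clarify)
        fix k m
        show "norm (psim psi D1 m (cmod (Y k \<omega>))) \<le> psi (cmod (Y k \<omega>))"
          using psim_bounds[where psi=psi and D=D1, OF nn mono gf(3)[of k], of m] by simp
      qed
      have "(\<lambda>m. \<Sum>k. psim psi D1 m (cmod (Y k \<omega>))) \<longlonglongrightarrow> (\<Sum>k. psi (cmod (Y k \<omega>)))"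
        using tannerys_theorem[OF lim bound gf(1)] by simp
      then show ?case by (intro tendsto_intros)
    qed
  next
    fix m
    show "AE \<omega> in M. norm (exp (- (\<Sum>n. psim psi D1 m (cmod (Y n \<omega>))))) \<le> 1"
      using AE_goodY[OF alpha]
    proof eventually_elim
      case (elim \<omega>)
      note gf = good_facts[OF elim]
      have "0 \<le> (\<Sum>n. psim psi D1 m (cmod (Y n \<omega>)))"
        by (rule suminf_nonneg[OF gf(2)]) (rule psim_nonneg[where psi=psi and D=D1, OF nn])
      then show ?case by simp
    qed
  next
    show "(\<lambda>\<omega>. exp (- (\<Sum>n. psi (cmod (Y n \<omega>))))) \<in> borel_measurable M" by measurable
  next
    fix m
    show "(\<lambda>\<omega>. exp (- (\<Sum>n. psim psi D1 m (cmod (Y n \<omega>))))) \<in> borel_measurable M" by measurable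
  qed simp
  have rhs_lim: "(\<lambda>m. exp (- (2 * pi * mu * (LBINT t:{D1..}. (1 - exp (- psim psi D1 m t)) * t))))
      \<longlonglongrightarrow> exp (- (2 * pi * mu * (LBINT t:{D1..}. (1 - exp (- psi t)) * t)))"
    by (intro tendsto_intros integral_psim_tendsto[OF D1pos alpha K psi_meas nn mono cont bnd])
  have eq: "(\<lambda>m. \<integral>\<omega>. exp (- (\<Sum>n. psim psi D1 m (cmod (Y n \<omega>)))) \<partial>M)
     = (\<lambda>m. exp (- (2 * pi * mu * (LBINT t:{D1..}. (1 - exp (- psim psi D1 m t)) * t))))"
    using pgfl_m[OF alpha nn] by simp
  show ?thesis using LIMSEQ_unique[OF lhs_lim] rhs_lim eq by simp
qed

end

lemma prod_of_bool: "finite A \<Longrightarrow> (\<Prod>x\<in>A. of_bool (P x) :: real) = of_bool (\<forall>x\<in>A. P x)"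
  by (induction A rule: finite_induct) auto

lemma (in prob_space) integral_of_bool:
  assumes "{\<omega>\<in>space M. Q \<omega>} \<in> sets M"
  shows "(\<integral>\<omega>. of_bool (Q \<omega>) \<partial>M) = prob {\<omega>\<in>space M. Q \<omega>}"
proof -
  have "(\<integral>\<omega>. of_bool (Q \<omega>) \<partial>M) = (\<integral>\<omega>. indicator {\<omega>\<in>space M. Q \<omega>} \<omega> \<partial>M)"
    by (rule Bochner_Integration.integral_cong) (auto simp: indicator_def)
  also have "\<dots> = prob {\<omega>\<in>space M. Q \<omega>}" using assms by simp
  finally show ?thesis .
qed

lemma (in prob_space) indep_var_to_set:
  assumes "indep_var MX X MW W"
  shows "indep_set (sets (vimage_algebra (space M) X MX)) (sets (vimage_algebra (space M) W MW))"
  using assms unfolding indep_var_eq by (simp add: sets_vimage_algebra)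

locale hfam = prob_space M for M :: "'a measure" +
  fixes h :: "nat option \<Rightarrow> nat \<Rightarrow> 'a \<Rightarrow> real"
  assumes h_exp: "\<And>k \<beta>. distributed M lborel (h k \<beta>) (exponential_density 1)"
    and h_indep: "indep_vars (\<lambda>_. borel) (\<lambda>(k, \<beta>). h k \<beta>) UNIV"
begin

lemma h_meas[measurable]: "h k \<beta> \<in> borel_measurable M"
  using distributed_measurable[OF h_exp[of k \<beta>]] by (simp add: measurable_lborel2)

lemma indep_groups:
  fixes G :: "'b \<Rightarrow> (nat option \<times> nat \<Rightarrow> real) \<Rightarrow> real"
  assumes G: "\<And>b. b \<in> L \<Longrightarrow> G b \<in> PiM (Kb b) (\<lambda>_. borel) \<rightarrow>\<^sub>M borel" and d: "disjoint_family_on Kb L"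
  shows "indep_vars (\<lambda>_. borel) (\<lambda>b \<omega>. G b (restrict (\<lambda>i. case_prod h i \<omega>) (Kb b))) L"
proof -
  have "indep_vars (\<lambda>b. PiM (Kb b) (\<lambda>_. borel)) (\<lambda>b \<omega>. restrict (\<lambda>i. (\<lambda>(k, \<beta>). h k \<beta>) i \<omega>) (Kb b)) L"
    by (rule indep_vars_restrict[OF h_indep _ d]) simp
  from indep_vars_compose2[OF this G] show ?thesis by simp
qed

lemma AE_h_pos: "AE \<omega> in M. \<forall>k \<beta>. 0 < h k \<beta> \<omega>"
  using exp_pos_AE[OF h_exp] by (simp add: AE_all_countable)

lemma laplace_partial:
  fixes a :: "nat \<Rightarrow> real" and c :: real
  assumes a: "\<And>n. 0 \<le> a n" and c: "0 \<le> c"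
  shows "(\<integral>\<omega>. exp (- (c * (\<Sum>n<N. h (Some n) \<beta> \<omega> * a n))) \<partial>M) = (\<Prod>n<N. 1 / (1 + c * a n))"
proof -
  let ?G = "\<lambda>n (x :: nat option \<times> nat \<Rightarrow> real). exp (- ((c * a n) * x (Some n, \<beta>)))"
  have ind: "indep_vars (\<lambda>_. borel) (\<lambda>n \<omega>. ?G n (restrict (\<lambda>i. case_prod h i \<omega>) {(Some n, \<beta>)})) UNIV"
    by (rule indep_groups) (auto simp: disjoint_family_on_def)
  have ind2: "indep_vars (\<lambda>_. borel) (\<lambda>n \<omega>. exp (- ((c * a n) * h (Some n) \<beta> \<omega>))) {..<N}"
    by (rule indep_vars_subset[OF _ subset_UNIV], rule indep_vars_cong[THEN iffD1, OF refl _ refl ind]) auto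
  have "(\<integral>\<omega>. exp (- (c * (\<Sum>n<N. h (Some n) \<beta> \<omega> * a n))) \<partial>M) = (\<integral>\<omega>. (\<Prod>n<N. exp (- ((c * a n) * h (Some n) \<beta> \<omega>))) \<partial>M)"
    by (simp add: exp_sum[symmetric] sum_negf sum_distrib_left mult_ac)
  also have "\<dots> = (\<Prod>n<N. \<integral>\<omega>. exp (- ((c * a n) * h (Some n) \<beta> \<omega>)) \<partial>M)"
  proof (rule indep_vars_lebesgue_integral[OF _ ind2])
    fix n assume "n \<in> {..<N}"
    show "integrable M (\<lambda>\<omega>. exp (- ((c * a n) * h (Some n) \<beta> \<omega>)))"
    proof (rule integrable_const_bound[where B=1])
      show "AE \<omega> in M. norm (exp (- ((c * a n) * h (Some n) \<beta> \<omega>))) \<le> 1"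
        using AE_h_pos
      proof eventually_elim
        case (elim \<omega>)
        then have "0 \<le> (c * a n) * h (Some n) \<beta> \<omega>" using a c by (simp add: less_imp_le)
        then show ?case by simp
      qed
    qed simp
  qed simp
  also have "\<dots> = (\<Prod>n<N. 1 / (1 + c * a n))"
    using exp_laplace[OF h_exp] a c by simp
  finally show ?thesis .
qed

end

context hfam
begin

lemma AE_summable_h:
  fixes a :: "nat \<Rightarrow> real"
  assumes a: "\<And>n. 0 \<le> a n" and sa: "summable a"
  shows "AE \<omega> in M. summable (\<lambda>n. h (Some n) \<beta> \<omega> * a n)"
proof -
  have "(\<integral>\<^sup>+\<omega>. (\<Sum>n. ennreal (h (Some n) \<beta> \<omega> * a n)) \<partial>M) = (\<Sum>n. \<integral>\<^sup>+\<omega>. ennreal (h (Some n) \<beta> \<omega> * a n) \<partial>M)"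
    by (rule nn_integral_suminf) measurable
  also have "\<dots> = (\<Sum>n. (\<integral>\<^sup>+\<omega>. ennreal (h (Some n) \<beta> \<omega>) \<partial>M) * ennreal (a n))"
  proof (intro arg_cong[where f=suminf] ext)
    fix n
    have "(\<integral>\<^sup>+\<omega>. ennreal (h (Some n) \<beta> \<omega> * a n) \<partial>M) = (\<integral>\<^sup>+\<omega>. ennreal (h (Some n) \<beta> \<omega>) * ennreal (a n) \<partial>M)"
      using a by (simp add: ennreal_mult'')
    also have "\<dots> = (\<integral>\<^sup>+\<omega>. ennreal (h (Some n) \<beta> \<omega>) \<partial>M) * ennreal (a n)"
      by (rule nn_integral_multc) simp
    finally show "(\<integral>\<^sup>+\<omega>. ennreal (h (Some n) \<beta> \<omega> * a n) \<partial>M) = (\<integral>\<^sup>+\<omega>. ennreal (h (Some n) \<beta> \<omega>) \<partial>M) * ennreal (a n)" .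
  qed
  also have "\<dots> = (\<Sum>n. ennreal (a n))" using exp_mean_nn[OF h_exp] by simp
  also have "\<dots> \<noteq> \<infinity>" using ennreal_suminf_neq_top[OF sa a] by simp
  finally have fin: "(\<integral>\<^sup>+\<omega>. (\<Sum>n. ennreal (h (Some n) \<beta> \<omega> * a n)) \<partial>M) \<noteq> \<infinity>" .
  have "AE \<omega> in M. (\<Sum>n. ennreal (h (Some n) \<beta> \<omega> * a n)) \<noteq> \<infinity>"
    by (rule nn_integral_PInf_AE[OF _ fin]) measurable
  then show ?thesis using AE_h_pos
  proof eventually_elim
    case (elim \<omega>)
    have "0 \<le> h (Some n) \<beta> \<omega> * a n" for n
      using elim(2) a[of n] by (simp add: less_imp_le)
    then show ?case
      by (rule summable_suminf_not_top) (use elim(1) in simp)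
  qed
qed

lemma laplace_full:
  fixes a :: "nat \<Rightarrow> real" and c :: real
  assumes a: "\<And>n. 0 \<le> a n" and sa: "summable a" and c: "0 \<le> c"
  shows "(\<integral>\<omega>. exp (- (c * (\<Sum>n. h (Some n) \<beta> \<omega> * a n))) \<partial>M) = exp (- (\<Sum>n. ln (1 + c * a n)))"
proof -
  have lhs: "(\<lambda>N. \<integral>\<omega>. exp (- (c * (\<Sum>n<N. h (Some n) \<beta> \<omega> * a n))) \<partial>M)
      \<longlonglongrightarrow> (\<integral>\<omega>. exp (- (c * (\<Sum>n. h (Some n) \<beta> \<omega> * a n))) \<partial>M)"
  proof (rule integral_dominated_convergence[where w="\<lambda>_. 1"])
    show "AE \<omega> in M. (\<lambda>N. exp (- (c * (\<Sum>n<N. h (Some n) \<beta> \<omega> * a n)))) \<longlonglongrightarrow> exp (- (c * (\<Sum>n. h (Some n) \<beta> \<omega> * a n)))"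
      using AE_summable_h[OF a sa, of \<beta>]
    proof eventually_elim
      case (elim \<omega>)
      show ?case by (intro tendsto_intros summable_LIMSEQ elim)
    qed
  next
    fix N
    show "AE \<omega> in M. norm (exp (- (c * (\<Sum>n<N. h (Some n) \<beta> \<omega> * a n)))) \<le> 1"
      using AE_h_pos
    proof eventually_elim
      case (elim \<omega>)
      have "0 \<le> (\<Sum>n<N. h (Some n) \<beta> \<omega> * a n)"
        by (intro sum_nonneg mult_nonneg_nonneg) (use elim a in \<open>auto intro: less_imp_le\<close>)
      then have "0 \<le> c * (\<Sum>n<N. h (Some n) \<beta> \<omega> * a n)" using c by simp
      then show ?case by simp
    qed
  next
    show "(\<lambda>\<omega>. exp (- (c * (\<Sum>n. h (Some n) \<beta> \<omega> * a n)))) \<in> borel_measurable M" by measurable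
  next
    fix N
    show "(\<lambda>\<omega>. exp (- (c * (\<Sum>n<N. h (Some n) \<beta> \<omega> * a n)))) \<in> borel_measurable M" by measurable
  qed simp
  have ca: "0 \<le> c * a n" for n using a c by simp
  have sl: "summable (\<lambda>n. ln (1 + c * a n))"
    by (rule summable_comparison_test[OF _ summable_mult[OF sa, of c]])
       (use ca ln_add_one_self_le_self in auto)
  have rhs: "(\<lambda>N. exp (- (\<Sum>n<N. ln (1 + c * a n)))) \<longlonglongrightarrow> exp (- (\<Sum>n. ln (1 + c * a n)))"
    by (intro tendsto_intros summable_LIMSEQ sl)
  have eq: "(\<integral>\<omega>. exp (- (c * (\<Sum>n<N. h (Some n) \<beta> \<omega> * a n))) \<partial>M) = exp (- (\<Sum>n<N. ln (1 + c * a n)))" for N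
  proof -
    have "(\<integral>\<omega>. exp (- (c * (\<Sum>n<N. h (Some n) \<beta> \<omega> * a n))) \<partial>M) = (\<Prod>n<N. 1 / (1 + c * a n))"
      by (rule laplace_partial[OF a c])
    also have "\<dots> = (\<Prod>n<N. exp (- ln (1 + c * a n)))"
    proof (rule prod.cong[OF refl])
      fix n
      have "0 < 1 + c * a n" using ca[of n] by simp
      then show "1 / (1 + c * a n) = exp (- ln (1 + c * a n))" by (simp add: exp_minus inverse_eq_divide)
    qed
    also have "\<dots> = exp (- (\<Sum>n<N. ln (1 + c * a n)))" by (simp add: exp_sum[symmetric] sum_negf)
    finally show ?thesis .
  qed
  show ?thesis using LIMSEQ_unique[OF lhs] rhs eq by simp
qed

end

context hfam
begin

definition Wf :: "real \<Rightarrow> (nat \<Rightarrow> real) \<Rightarrow> real \<Rightarrow> nat \<Rightarrow> (nat option \<times> nat \<Rightarrow> real) \<Rightarrow> real" where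
  "Wf c a s0 \<beta> x = c * (\<Sum>n. x (Some n, \<beta>) * a n) + s0"

lemma Wf_meas: "range (\<lambda>n. (Some n, \<beta>)) \<subseteq> I \<Longrightarrow> Wf c a s0 \<beta> \<in> PiM I (\<lambda>_. borel) \<rightarrow>\<^sub>M borel"
  unfolding Wf_def
  by (intro borel_measurable_add borel_measurable_const borel_measurable_times borel_measurable_suminf
      measurable_component_singleton) auto

lemma prob_beta:
  fixes a :: "nat \<Rightarrow> real" and c s0 :: real
  assumes a: "\<And>n. 0 \<le> a n" and sa: "summable a" and c: "0 \<le> c" and s0: "0 \<le> s0"
  shows "prob {\<omega>\<in>space M. c * (\<Sum>n. h (Some n) \<beta> \<omega> * a n) + s0 \<le> h None \<beta> \<omega>}
       = exp (- s0) * exp (- (\<Sum>n. ln (1 + c * a n)))"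
proof -
  define W where "W \<omega> = c * (\<Sum>n. h (Some n) \<beta> \<omega> * a n) + s0" for \<omega>
  have Wm[measurable]: "W \<in> borel_measurable M" unfolding W_def by measurable
  let ?Kb = "case_bool (range (\<lambda>n. (Some n, \<beta>))) {(None, \<beta>)}"
  let ?G = "case_bool (Wf c a s0 \<beta>) (\<lambda>x. x (None, \<beta>))"
  have ind0: "indep_vars (\<lambda>_. borel) (\<lambda>b \<omega>. ?G b (restrict (\<lambda>i. case_prod h i \<omega>) (?Kb b))) UNIV"
  proof (rule indep_groups)
    fix b :: bool
    show "?G b \<in> PiM (?Kb b) (\<lambda>_. borel) \<rightarrow>\<^sub>M borel"
      by (cases b) (auto intro!: Wf_meas measurable_component_singleton)
  qed (auto simp: disjoint_family_on_def split: bool.split)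
  have "indep_vars (case_bool borel borel) (case_bool W (h None \<beta>)) UNIV"
  proof (rule indep_vars_cong[THEN iffD1, OF refl _ _ ind0])
    fix b :: bool
    show "(\<lambda>\<omega>. ?G b (restrict (\<lambda>i. case_prod h i \<omega>) (?Kb b))) = case_bool W (h None \<beta>) b"
      by (cases b) (auto simp: W_def Wf_def)
    show "(borel :: real measure) = case_bool borel borel b" by (cases b) auto
  qed
  then have iv: "indep_var borel W borel (h None \<beta>)" by (simp add: indep_var_def)
  have AEW: "AE \<omega> in M. 0 \<le> W \<omega>"
    using AE_summable_h[OF a sa, of \<beta>] AE_h_pos
  proof eventually_elim
    case (elim \<omega>)
    have "0 \<le> (\<Sum>n. h (Some n) \<beta> \<omega> * a n)"
      by (rule suminf_nonneg[OF elim(1)]) (use elim(2) a in \<open>simp add: less_imp_le\<close>)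
    then show ?case using c s0 by (simp add: W_def)
  qed
  have "prob {\<omega>\<in>space M. W \<omega> \<le> h None \<beta> \<omega>} = (\<integral>\<omega>. of_bool (W \<omega> \<le> h None \<beta> \<omega>) \<partial>M)"
    by (rule integral_of_bool[symmetric]) measurable
  also have "\<dots> = (\<integral>\<omega>. (\<lambda>(w, x). of_bool (w \<le> x) :: real) (W \<omega>, h None \<beta> \<omega>) \<partial>M)" by simp
  also have "\<dots> = (\<integral>\<omega>'. (\<integral>\<omega>. (\<lambda>(w, x). of_bool (w \<le> x) :: real) (W \<omega>', h None \<beta> \<omega>) \<partial>M) \<partial>M)"
    by (rule freeze[OF _ _ indep_var_to_set[OF iv], where B=1]) (auto simp: measurable_lborel2)
  also have "\<dots> = (\<integral>\<omega>'. exp (- W \<omega>') \<partial>M)"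
  proof (rule integral_cong_AE)
    show "AE \<omega>' in M. (\<integral>\<omega>. (\<lambda>(w, x). of_bool (w \<le> x) :: real) (W \<omega>', h None \<beta> \<omega>) \<partial>M) = exp (- W \<omega>')"
      using AEW
    proof eventually_elim
      case (elim \<omega>')
      have "(\<integral>\<omega>. (\<lambda>(w, x). of_bool (w \<le> x) :: real) (W \<omega>', h None \<beta> \<omega>) \<partial>M) = (\<integral>\<omega>. of_bool (W \<omega>' \<le> h None \<beta> \<omega>) \<partial>M)"
        by simp
      also have "\<dots> = prob {\<omega>\<in>space M. W \<omega>' \<le> h None \<beta> \<omega>}"
        by (rule integral_of_bool) measurable
      also have "\<dots> = exp (- W \<omega>')" by (rule exp_tail_ge[OF h_exp elim])
      finally show ?case .
    qed
  next
    have "(\<lambda>x. \<integral>\<omega>. (\<lambda>(w, x). of_bool (w \<le> x) :: real) (x, h None \<beta> \<omega>) \<partial>M) \<in> borel_measurable borel"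
      by measurable
    then show "(\<lambda>\<omega>'. \<integral>\<omega>. (\<lambda>(w, x). of_bool (w \<le> x) :: real) (W \<omega>', h None \<beta> \<omega>) \<partial>M) \<in> borel_measurable M"
      by (rule measurable_compose[OF Wm, rotated])
  qed measurable
  also have "\<dots> = (\<integral>\<omega>'. exp (- s0) * exp (- (c * (\<Sum>n. h (Some n) \<beta> \<omega>' * a n))) \<partial>M)"
    by (simp add: W_def exp_add[symmetric] exp_diff algebra_simps)
  also have "\<dots> = exp (- s0) * (\<integral>\<omega>'. exp (- (c * (\<Sum>n. h (Some n) \<beta> \<omega>' * a n))) \<partial>M)"
    by (rule integral_mult_right_zero)
  also have "\<dots> = exp (- s0) * exp (- (\<Sum>n. ln (1 + c * a n)))"
    by (simp add: laplace_full[OF a sa c])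
  finally show ?thesis by (simp add: W_def)
qed

lemma prob_all:
  fixes a :: "nat \<Rightarrow> real" and c s0 :: real and l :: nat
  assumes a: "\<And>n. 0 \<le> a n" and sa: "summable a" and c: "0 \<le> c" and s0: "0 \<le> s0"
  shows "prob {\<omega>\<in>space M. \<forall>\<beta>\<in>{1..l}. c * (\<Sum>n. h (Some n) \<beta> \<omega> * a n) + s0 \<le> h None \<beta> \<omega>}
       = (exp (- s0) * exp (- (\<Sum>n. ln (1 + c * a n)))) ^ l"
proof -
  let ?Kb = "\<lambda>\<beta>::nat. (UNIV :: nat option set) \<times> {\<beta>}"
  let ?G = "\<lambda>\<beta> x. of_bool (Wf c a s0 \<beta> x \<le> x (None, \<beta>)) :: real"
  have ind0: "indep_vars (\<lambda>_. borel) (\<lambda>b \<omega>. ?G b (restrict (\<lambda>i. case_prod h i \<omega>) (?Kb b))) {1..l}"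
  proof (rule indep_groups)
    fix b :: nat
    have wm: "(\<lambda>x. Wf c a s0 b x) \<in> PiM (?Kb b) (\<lambda>_. borel) \<rightarrow>\<^sub>M borel" using Wf_meas[of b "?Kb b" c a s0] by auto
    have cm: "(\<lambda>x. x (None, b)) \<in> PiM (?Kb b) (\<lambda>_. borel) \<rightarrow>\<^sub>M (borel :: real measure)"
      by (rule measurable_component_singleton) auto
    have "Measurable.pred (PiM (?Kb b) (\<lambda>_. borel)) (\<lambda>x. Wf c a s0 b x \<le> x (None, b))"
      unfolding pred_def using borel_measurable_le[OF wm cm] by simp
    from measurable_compose[OF this measurable_of_bool]
    show "?G b \<in> PiM (?Kb b) (\<lambda>_. borel) \<rightarrow>\<^sub>M borel" by simp
  qed (auto simp: disjoint_family_on_def)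
  have ind: "indep_vars (\<lambda>_. borel) (\<lambda>\<beta> \<omega>. of_bool (c * (\<Sum>n. h (Some n) \<beta> \<omega> * a n) + s0 \<le> h None \<beta> \<omega>) :: real) {1..l}"
    by (rule indep_vars_cong[THEN iffD1, OF refl _ refl ind0]) (auto simp: Wf_def)
  have "prob {\<omega>\<in>space M. \<forall>\<beta>\<in>{1..l}. c * (\<Sum>n. h (Some n) \<beta> \<omega> * a n) + s0 \<le> h None \<beta> \<omega>}
      = (\<integral>\<omega>. of_bool (\<forall>\<beta>\<in>{1..l}. c * (\<Sum>n. h (Some n) \<beta> \<omega> * a n) + s0 \<le> h None \<beta> \<omega>) \<partial>M)"
    by (rule integral_of_bool[symmetric]) measurable
  also have "\<dots> = (\<integral>\<omega>. (\<Prod>\<beta>\<in>{1..l}. of_bool (c * (\<Sum>n. h (Some n) \<beta> \<omega> * a n) + s0 \<le> h None \<beta> \<omega>)) \<partial>M)"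
    by (simp add: prod_of_bool)
  also have "\<dots> = (\<Prod>\<beta>\<in>{1..l}. \<integral>\<omega>. of_bool (c * (\<Sum>n. h (Some n) \<beta> \<omega> * a n) + s0 \<le> h None \<beta> \<omega>) \<partial>M)"
    by (rule indep_vars_lebesgue_integral[OF _ ind]) (auto intro!: integrable_const_bound[where B=1])
  also have "\<dots> = (\<Prod>\<beta>\<in>{1..l}. exp (- s0) * exp (- (\<Sum>n. ln (1 + c * a n))))"
  proof (rule prod.cong[OF refl])
    fix \<beta>
    show "(\<integral>\<omega>. of_bool (c * (\<Sum>n. h (Some n) \<beta> \<omega> * a n) + s0 \<le> h None \<beta> \<omega>) \<partial>M) = exp (- s0) * exp (- (\<Sum>n. ln (1 + c * a n)))"
      by (subst integral_of_bool) (measurable, rule prob_beta[OF a sa c s0])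
  qed
  also have "\<dots> = (exp (- s0) * exp (- (\<Sum>n. ln (1 + c * a n)))) ^ l" by simp
  finally show ?thesis .
qed

end

definition SINRok :: "real \<Rightarrow> real \<Rightarrow> real \<Rightarrow> real \<Rightarrow> nat \<Rightarrow> real \<Rightarrow> (nat \<Rightarrow> complex) \<Rightarrow> (nat option \<times> nat \<Rightarrow> real) \<Rightarrow> bool" where
  "SINRok P \<alpha> \<sigma>2 \<gamma> l r y hh \<longleftrightarrow> (\<forall>\<beta>\<in>{1..l}. P * hh (None, \<beta>) * r powr (-\<alpha>) / ((\<Sum>n. P * hh (Some n, \<beta>) * cmod (y n) powr (-\<alpha>)) + \<sigma>2) \<ge> \<gamma>)"

lemma sinr_iff:
  fixes P r d \<gamma> h0 \<alpha> :: real
  assumes P: "0 < P" and r: "0 < r" and d: "0 < d"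
  shows "(\<gamma> \<le> P * h0 * r powr (-\<alpha>) / d) \<longleftrightarrow> (\<gamma> * r powr \<alpha> * d / P \<le> h0)"
proof -
  have q: "0 < r powr \<alpha>" using r by simp
  have "P * h0 * r powr (-\<alpha>) / d = P * h0 / (r powr \<alpha> * d)"
    using r by (simp add: powr_minus divide_inverse)
  then have "(\<gamma> \<le> P * h0 * r powr (-\<alpha>) / d) \<longleftrightarrow> \<gamma> * (r powr \<alpha> * d) \<le> P * h0"
    using q d by (simp add: pos_le_divide_eq)
  also have "\<dots> \<longleftrightarrow> (\<gamma> * r powr \<alpha> * d / P \<le> h0)"
    using P by (simp add: pos_divide_le_eq mult_ac)
  finally show ?thesis .
qed

context hfam
begin

lemma K_formula:
  fixes P \<alpha> \<sigma>2 \<gamma> r D1 :: real and l :: nat and y :: "nat \<Rightarrow> complex"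
  assumes P: "0 < P" and s2: "0 \<le> \<sigma>2" and g: "0 < \<gamma>" and r: "0 < r" and D1: "0 < D1"
    and y: "\<And>n. D1 \<le> cmod (y n)" and sy: "summable (\<lambda>n. cmod (y n) powr (-\<alpha>))"
  shows "(\<integral>\<omega>. of_bool (SINRok P \<alpha> \<sigma>2 \<gamma> l r y (\<lambda>(k, \<beta>). h k \<beta> \<omega>)) \<partial>M)
       = exp (- (real l * (\<gamma> * r powr \<alpha>) * \<sigma>2 / P))
         * exp (- (\<Sum>n. real l * ln (1 + (\<gamma> * r powr \<alpha>) * cmod (y n) powr (-\<alpha>))))"
proof -
  define a where "a n = cmod (y n) powr (-\<alpha>)" for n
  define c where "c = \<gamma> * r powr \<alpha>"
  define s0 where "s0 = c * \<sigma>2 / P"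
  have apos: "0 < a n" for n
  proof -
    have "0 < cmod (y n)" using y[of n] D1 by linarith
    then show ?thesis by (simp add: a_def)
  qed
  have a0: "0 \<le> a n" for n using apos[of n] by simp
  have aeq: "a = (\<lambda>n. cmod (y n) powr (-\<alpha>))" by (simp add: fun_eq_iff a_def)
  have sa: "summable a" using sy by (simp add: aeq)
  have c: "0 < c" using g r by (simp add: c_def)
  have s00: "0 \<le> s0" using c s2 P by (simp add: s0_def)
  have AEg: "AE \<omega> in M. (\<forall>k \<beta>. 0 < h k \<beta> \<omega>) \<and> (\<forall>\<beta>. summable (\<lambda>n. h (Some n) \<beta> \<omega> * a n))"
    using AE_h_pos AE_summable_h[OF a0 sa] by (simp add: AE_all_countable)
  have "(\<integral>\<omega>. of_bool (SINRok P \<alpha> \<sigma>2 \<gamma> l r y (\<lambda>(k, \<beta>). h k \<beta> \<omega>)) \<partial>M)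
      = (\<integral>\<omega>. (of_bool :: bool \<Rightarrow> real) (\<forall>\<beta>\<in>{1..l}. c * (\<Sum>n. h (Some n) \<beta> \<omega> * a n) + s0 \<le> h None \<beta> \<omega>) \<partial>M)"
  proof -
    have ae: "AE \<omega> in M. of_bool (SINRok P \<alpha> \<sigma>2 \<gamma> l r y (\<lambda>(k, \<beta>). h k \<beta> \<omega>)) =
        (of_bool (\<forall>\<beta>\<in>{1..l}. c * (\<Sum>n. h (Some n) \<beta> \<omega> * a n) + s0 \<le> h None \<beta> \<omega>) :: real)"
      using AEg
    proof eventually_elim
      case (elim \<omega>)
      have each: "(\<gamma> \<le> P * h None \<beta> \<omega> * r powr (-\<alpha>) / ((\<Sum>n. P * h (Some n) \<beta> \<omega> * cmod (y n) powr (-\<alpha>)) + \<sigma>2))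
          \<longleftrightarrow> (c * (\<Sum>n. h (Some n) \<beta> \<omega> * a n) + s0 \<le> h None \<beta> \<omega>)" for \<beta>
      proof -
        define T where "T = (\<Sum>n. h (Some n) \<beta> \<omega> * a n)"
        have sT: "summable (\<lambda>n. h (Some n) \<beta> \<omega> * a n)" using elim by simp
        have T: "0 < T" unfolding T_def
          by (rule suminf_pos[OF sT]) (use elim apos in simp)
        have "(\<Sum>n. P * h (Some n) \<beta> \<omega> * cmod (y n) powr (-\<alpha>)) = (\<Sum>n. P * (h (Some n) \<beta> \<omega> * a n))"
          by (simp add: a_def mult.assoc)
        also have "\<dots> = P * T" unfolding T_def by (rule suminf_mult[OF sT])
        finally have eqs: "(\<Sum>n. P * h (Some n) \<beta> \<omega> * cmod (y n) powr (-\<alpha>)) = P * T" .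
        have d: "0 < P * T + \<sigma>2" using P T s2 by (simp add: add_pos_nonneg)
        have "(\<gamma> \<le> P * h None \<beta> \<omega> * r powr (-\<alpha>) / (P * T + \<sigma>2)) \<longleftrightarrow> (\<gamma> * r powr \<alpha> * (P * T + \<sigma>2) / P \<le> h None \<beta> \<omega>)"
          by (rule sinr_iff[OF P r d])
        also have "\<gamma> * r powr \<alpha> * (P * T + \<sigma>2) / P = c * T + s0"
          using P by (simp add: c_def s0_def field_simps)
        finally show ?thesis using eqs by (simp add: T_def)
      qed
      show ?case unfolding SINRok_def using each by simp
    qed
    have m1: "(\<lambda>\<omega>. of_bool (SINRok P \<alpha> \<sigma>2 \<gamma> l r y (\<lambda>(k, \<beta>). h k \<beta> \<omega>)) :: real) \<in> borel_measurable M"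
      unfolding SINRok_def by measurable
    have m2: "(\<lambda>\<omega>. of_bool (\<forall>\<beta>\<in>{1..l}. c * (\<Sum>n. h (Some n) \<beta> \<omega> * a n) + s0 \<le> h None \<beta> \<omega>) :: real) \<in> borel_measurable M"
      by measurable
    show ?thesis by (rule integral_cong_AE[OF m1 m2 ae])
  qed
  also have "\<dots> = prob {\<omega>\<in>space M. \<forall>\<beta>\<in>{1..l}. c * (\<Sum>n. h (Some n) \<beta> \<omega> * a n) + s0 \<le> h None \<beta> \<omega>}"
    by (rule integral_of_bool) measurable
  also have "\<dots> = (exp (- s0) * exp (- (\<Sum>n. ln (1 + c * a n)))) ^ l"
    by (rule prob_all[OF a0 sa _ s00]) (use c in simp)
  also have "\<dots> = exp (- (real l * s0)) * exp (- (real l * (\<Sum>n. ln (1 + c * a n))))"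
    by (simp add: power_mult_distrib exp_of_nat_mult[symmetric])
  also have "real l * (\<Sum>n. ln (1 + c * a n)) = (\<Sum>n. real l * ln (1 + c * a n))"
  proof -
    have ca: "0 \<le> c * a n" for n using a0[of n] c by simp
    have "summable (\<lambda>n. ln (1 + c * a n))"
      by (rule summable_comparison_test[OF _ summable_mult[OF sa, of c]])
         (use ca ln_add_one_self_le_self in auto)
    then show ?thesis by (rule suminf_mult[symmetric])
  qed
  finally show ?thesis by (simp add: s0_def c_def a_def mult.assoc)
qed

end

theorem lemma3:
  fixes M :: "'a measure"
    and \<alpha> P \<sigma>2 \<gamma> \<mu> D0 D1 :: real and l :: nat
    and R :: "'a \<Rightarrow> real"
    and Y :: "nat \<Rightarrow> 'a \<Rightarrow> complex"
    and h :: "nat option \<Rightarrow> nat \<Rightarrow> 'a \<Rightarrow> real"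
  assumes "prob_space M"
    and "\<alpha> > 2" and "P > 0" and "\<sigma>2 \<ge> 0" and "\<gamma> > 0" and "\<mu> > 0" and "l \<ge> 1"
    and "0 < D0" and "D0 < D1"
    and R_distr: "distributed M lborel R
           (\<lambda>r. ennreal (indicator {D0..D1} r * (2 * r / (D1\<^sup>2 - D0\<^sup>2))))"
    and PPP: "poisson_pp M \<mu> {y. D1 \<le> cmod y} Y"
    and h_exp: "\<And>k \<beta>. distributed M lborel (h k \<beta>) (exponential_density 1)"
    and h_indep: "prob_space.indep_vars M (\<lambda>_. borel) (\<lambda>(k, \<beta>). h k \<beta>) UNIV"
    and Y_meas: "(\<lambda>\<omega> n. Y n \<omega>) \<in> M \<rightarrow>\<^sub>M PiM UNIV (\<lambda>_. borel)"
    and h_meas: "(\<lambda>\<omega> (k, \<beta>). h k \<beta> \<omega>) \<in> M \<rightarrow>\<^sub>M PiM UNIV (\<lambda>_. borel)"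
    and indep_R: "prob_space.indep_set M
           (sets (vimage_algebra (space M) R borel))
           (sets (vimage_algebra (space M) (\<lambda>\<omega>. ((\<lambda>n. Y n \<omega>), (\<lambda>(k, \<beta>). h k \<beta> \<omega>)))
                    (PiM UNIV (\<lambda>_. borel) \<Otimes>\<^sub>M PiM UNIV (\<lambda>_. borel))))"
    and indep_Y: "prob_space.indep_set M
           (sets (vimage_algebra (space M) (\<lambda>\<omega> n. Y n \<omega>) (PiM UNIV (\<lambda>_. borel))))
           (sets (vimage_algebra (space M) (\<lambda>\<omega> (k, \<beta>). h k \<beta> \<omega>) (PiM UNIV (\<lambda>_. borel))))"
  shows "measure M {\<omega> \<in> space M. \<forall>\<beta>\<in>{1..l}.
            P * h None \<beta> \<omega> * R \<omega> powr (-\<alpha>)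
              / ((\<Sum>n. P * h (Some n) \<beta> \<omega> * cmod (Y n \<omega>) powr (-\<alpha>)) + \<sigma>2) \<ge> \<gamma>}
         = (LBINT r:{D0..D1}. exp (- (real l * \<gamma> * \<sigma>2 * r powr \<alpha> / P))
              * exp (- 2 * pi * \<mu> * F_i \<alpha> \<gamma> l D1 r)
              * (2 * r / (D1\<^sup>2 - D0\<^sup>2)))"
proof -
  interpret prob_space M by fact
  have Rm[measurable]: "R \<in> borel_measurable M"
    using distributed_measurable[OF R_distr] by (simp add: measurable_lborel2)
  interpret H: hfam M h by unfold_locales (rule h_exp, rule h_indep)
  interpret PP: ppp2 M \<mu> "{y. D1 \<le> cmod y}" Y D1
    by unfold_locales (use PPP \<open>0 < \<mu>\<close> \<open>0 < D0\<close> \<open>D0 < D1\<close> in auto)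
  note [measurable] = PP.Ymeas H.h_meas
  have D1: "0 < D1" using \<open>0 < D0\<close> \<open>D0 < D1\<close> by simp
  define \<Phi> :: "real \<times> ((nat \<Rightarrow> complex) \<times> (nat option \<times> nat \<Rightarrow> real)) \<Rightarrow> real"
    where "\<Phi> = (\<lambda>(r, y, hh). of_bool (SINRok P \<alpha> \<sigma>2 \<gamma> l r y hh))"
  have \<Phi>m[measurable]: "\<Phi> \<in> borel_measurable (borel \<Otimes>\<^sub>M (PiM UNIV (\<lambda>_. borel) \<Otimes>\<^sub>M PiM UNIV (\<lambda>_. borel)))"
  proof -
    have e: "\<Phi> = (\<lambda>x. of_bool (\<forall>\<beta>\<in>{1..l}. P * snd (snd x) (None, \<beta>) * fst x powr (-\<alpha>) / ((\<Sum>n. P * snd (snd x) (Some n, \<beta>) * cmod (fst (snd x) n) powr (-\<alpha>)) + \<sigma>2) \<ge> \<gamma>))"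
      by (auto simp: \<Phi>_def SINRok_def fun_eq_iff)
    show ?thesis unfolding e by measurable
  qed
  define W where "W = (\<lambda>\<omega>. ((\<lambda>n. Y n \<omega>), (\<lambda>(k, \<beta>). h k \<beta> \<omega>)))"
  have Wm[measurable]: "W \<in> M \<rightarrow>\<^sub>M (PiM UNIV (\<lambda>_. borel) \<Otimes>\<^sub>M PiM UNIV (\<lambda>_. borel))"
    unfolding W_def using Y_meas h_meas by (rule measurable_Pair)
  define J where "J r = (\<integral>\<omega>. \<Phi> (r, W \<omega>) \<partial>M)" for r
  define Q where "Q r = exp (- (real l * \<gamma> * \<sigma>2 * r powr \<alpha> / P)) * exp (- 2 * pi * \<mu> * F_i \<alpha> \<gamma> l D1 r)" for r
  define f where "f r = indicator {D0..D1} r * (2 * r / (D1\<^sup>2 - D0\<^sup>2))" for r :: real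
  have step1: "measure M {\<omega> \<in> space M. \<forall>\<beta>\<in>{1..l}.
            P * h None \<beta> \<omega> * R \<omega> powr (-\<alpha>)
              / ((\<Sum>n. P * h (Some n) \<beta> \<omega> * cmod (Y n \<omega>) powr (-\<alpha>)) + \<sigma>2) \<ge> \<gamma>}
      = (\<integral>\<omega>. \<Phi> (R \<omega>, W \<omega>) \<partial>M)"
  proof -
    have "measure M {\<omega> \<in> space M. \<forall>\<beta>\<in>{1..l}.
            P * h None \<beta> \<omega> * R \<omega> powr (-\<alpha>)
              / ((\<Sum>n. P * h (Some n) \<beta> \<omega> * cmod (Y n \<omega>) powr (-\<alpha>)) + \<sigma>2) \<ge> \<gamma>}
      = (\<integral>\<omega>. of_bool (\<forall>\<beta>\<in>{1..l}.
            P * h None \<beta> \<omega> * R \<omega> powr (-\<alpha>)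
              / ((\<Sum>n. P * h (Some n) \<beta> \<omega> * cmod (Y n \<omega>) powr (-\<alpha>)) + \<sigma>2) \<ge> \<gamma>) \<partial>M)"
      by (rule integral_of_bool[symmetric]) measurable
    also have "\<dots> = (\<integral>\<omega>. \<Phi> (R \<omega>, W \<omega>) \<partial>M)"
      by (simp add: \<Phi>_def W_def SINRok_def)
    finally show ?thesis .
  qed
  have step2: "(\<integral>\<omega>. \<Phi> (R \<omega>, W \<omega>) \<partial>M) = (\<integral>\<omega>'. J (R \<omega>') \<partial>M)"
    unfolding J_def
    by (rule freeze[OF Rm Wm indep_R[folded W_def] \<Phi>m, where B=1]) (auto simp: \<Phi>_def)
  have Jm[measurable]: "J \<in> borel_measurable borel" unfolding J_def by measurable
  have step3: "(\<integral>\<omega>'. J (R \<omega>') \<partial>M) = (\<integral>r. f r * J r \<partial>lborel)"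
  proof (rule distributed_integral[symmetric])
    show "distributed M lborel R (\<lambda>r. ennreal (f r))" using R_distr by (simp add: f_def)
    show "J \<in> borel_measurable lborel" by (simp add: measurable_lborel1)
    fix x show "0 \<le> f x" using \<open>D0 < D1\<close> \<open>0 < D0\<close> by (auto simp: f_def indicator_def intro!: divide_nonneg_pos power_strict_mono)
  qed
  have JQ: "J r = Q r" if r: "D0 \<le> r" "r \<le> D1" for r
  proof -
    have r0: "0 < r" using r \<open>0 < D0\<close> by simp
    define c where "c = \<gamma> * r powr \<alpha>"
    have c: "0 < c" using \<open>0 < \<gamma>\<close> r0 by (simp add: c_def)
    define psi where "psi t = real l * ln (1 + c * t powr (-\<alpha>))" for t
    have g1[measurable]: "(\<lambda>(y, hh). \<Phi> (r, y, hh)) \<in> borel_measurable (PiM UNIV (\<lambda>_. borel) \<Otimes>\<^sub>M PiM UNIV (\<lambda>_. borel))"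
      by measurable
    have "J r = (\<integral>\<omega>. (\<lambda>(y, hh). \<Phi> (r, y, hh)) ((\<lambda>n. Y n \<omega>), (\<lambda>(k, \<beta>). h k \<beta> \<omega>)) \<partial>M)"
      by (simp add: J_def W_def)
    also have "\<dots> = (\<integral>\<omega>'. (\<integral>\<omega>. (\<lambda>(y, hh). \<Phi> (r, y, hh)) ((\<lambda>n. Y n \<omega>'), (\<lambda>(k, \<beta>). h k \<beta> \<omega>)) \<partial>M) \<partial>M)"
      by (rule freeze[OF Y_meas h_meas indep_Y g1, where B=1]) (auto simp: \<Phi>_def)
    also have "\<dots> = (\<integral>\<omega>'. exp (- (real l * (\<gamma> * r powr \<alpha>) * \<sigma>2 / P)) * exp (- (\<Sum>n. psi (cmod (Y n \<omega>')))) \<partial>M)"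
    proof (rule integral_cong_AE)
      show "AE \<omega>' in M. (\<integral>\<omega>. (\<lambda>(y, hh). \<Phi> (r, y, hh)) ((\<lambda>n. Y n \<omega>'), (\<lambda>(k, \<beta>). h k \<beta> \<omega>)) \<partial>M)
          = exp (- (real l * (\<gamma> * r powr \<alpha>) * \<sigma>2 / P)) * exp (- (\<Sum>n. psi (cmod (Y n \<omega>'))))"
        using PP.AE_goodY[OF \<open>2 < \<alpha>\<close>]
      proof eventually_elim
        case (elim \<omega>')
        have y: "\<And>n. D1 \<le> cmod (Y n \<omega>')" and sy: "summable (\<lambda>n. cmod (Y n \<omega>') powr (-\<alpha>))"
          using elim unfolding PP.goodY_def by auto
        have "(\<integral>\<omega>. (\<lambda>(y, hh). \<Phi> (r, y, hh)) ((\<lambda>n. Y n \<omega>'), (\<lambda>(k, \<beta>). h k \<beta> \<omega>)) \<partial>M)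
            = (\<integral>\<omega>. of_bool (SINRok P \<alpha> \<sigma>2 \<gamma> l r (\<lambda>n. Y n \<omega>') (\<lambda>(k, \<beta>). h k \<beta> \<omega>)) \<partial>M)"
          by (simp add: \<Phi>_def)
        also have "\<dots> = exp (- (real l * (\<gamma> * r powr \<alpha>) * \<sigma>2 / P))
         * exp (- (\<Sum>n. real l * ln (1 + (\<gamma> * r powr \<alpha>) * cmod (Y n \<omega>') powr (-\<alpha>))))"
          by (rule H.K_formula[OF \<open>0 < P\<close> \<open>0 \<le> \<sigma>2\<close> \<open>0 < \<gamma>\<close> r0 D1 y sy])
        finally show ?case by (simp add: psi_def c_def)
      qed
    next
      have "(\<lambda>y. \<integral>\<omega>. (\<lambda>(y, hh). \<Phi> (r, y, hh)) (y, (\<lambda>(k, \<beta>). h k \<beta> \<omega>)) \<partial>M) \<in> borel_measurable (PiM UNIV (\<lambda>_. borel))"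
        using h_meas by measurable
      from measurable_compose[OF Y_meas this]
      show "(\<lambda>\<omega>'. \<integral>\<omega>. (\<lambda>(y, hh). \<Phi> (r, y, hh)) ((\<lambda>n. Y n \<omega>'), (\<lambda>(k, \<beta>). h k \<beta> \<omega>)) \<partial>M) \<in> borel_measurable M" .
    next
      show "(\<lambda>\<omega>'. exp (- (real l * (\<gamma> * r powr \<alpha>) * \<sigma>2 / P)) * exp (- (\<Sum>n. psi (cmod (Y n \<omega>'))))) \<in> borel_measurable M"
        unfolding psi_def by measurable
    qed
    also have "\<dots> = exp (- (real l * (\<gamma> * r powr \<alpha>) * \<sigma>2 / P)) * (\<integral>\<omega>'. exp (- (\<Sum>n. psi (cmod (Y n \<omega>')))) \<partial>M)"
      by (rule integral_mult_right_zero)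
    also have "(\<integral>\<omega>'. exp (- (\<Sum>n. psi (cmod (Y n \<omega>')))) \<partial>M) = exp (- (2 * pi * \<mu> * (LBINT t:{D1..}. (1 - exp (- psi t)) * t)))"
    proof (rule PP.pgfl[where K="real l * c"])
      show "2 < \<alpha>" by fact
      show "0 \<le> real l * c" using c by simp
      show "psi \<in> borel_measurable borel" unfolding psi_def by measurable
      fix t assume t: "D1 \<le> t"
      have t0: "0 < t" using t D1 by simp
      have q: "0 \<le> c * t powr (-\<alpha>)" using c by simp
      show "0 \<le> psi t" unfolding psi_def using q by simp
      show "psi t \<le> real l * c * t powr (-\<alpha>)"
        unfolding psi_def using ln_add_one_self_le_self[OF q] by (simp add: mult_left_mono mult.assoc)
    next
      fix s t assume s: "D1 \<le> s" and st: "s \<le> t"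
      have s0: "0 < s" using s D1 by simp
      have "t powr (-\<alpha>) \<le> s powr (-\<alpha>)" using s0 st \<open>2 < \<alpha>\<close> by (intro powr_mono2') auto
      then have "c * t powr (-\<alpha>) \<le> c * s powr (-\<alpha>)" using c by (simp add: mult_left_mono)
      then have "ln (1 + c * t powr (-\<alpha>)) \<le> ln (1 + c * s powr (-\<alpha>))"
        using c by (subst ln_le_cancel_iff) (auto intro: add_pos_nonneg)
      then show "psi t \<le> psi s" unfolding psi_def by (simp add: mult_left_mono)
    next
      show "continuous_on {D1..} psi"
      proof (intro continuous_at_imp_continuous_on ballI)
        fix t assume "t \<in> {D1..}"
        then have t0: "0 < t" using D1 by simp
        have "0 < 1 + c * t powr (-\<alpha>)" using c by (simp add: add_pos_nonneg)
        then show "isCont psi t" unfolding psi_def using t0 by (intro continuous_intros) auto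
      qed
    qed
    also have "(LBINT t:{D1..}. (1 - exp (- psi t)) * t) = F_i \<alpha> \<gamma> l D1 r"
      unfolding F_i_def
    proof (rule set_lebesgue_integral_cong, simp, intro allI impI)
      fix t assume "t \<in> {D1..}"
      then have t0: "0 < t" using D1 by simp
      have u: "0 < 1 + c * t powr (-\<alpha>)" using c by (simp add: add_pos_nonneg)
      have "exp (- psi t) = exp (- ln (1 + c * t powr (-\<alpha>))) ^ l"
        unfolding psi_def by (simp add: exp_of_nat_mult[symmetric])
      also have "\<dots> = (1 / (1 + c * t powr (-\<alpha>))) ^ l" using u by (simp add: exp_minus inverse_eq_divide)
      finally show "(1 - exp (- psi t)) * t = (1 - (1 / (1 + \<gamma> * r powr \<alpha> * t powr (-\<alpha>))) ^ l) * t"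
        by (simp add: c_def)
    qed
    finally show ?thesis by (simp add: Q_def mult_ac)
  qed
  have step4: "(\<integral>r. f r * J r \<partial>lborel) = (\<integral>r. f r * Q r \<partial>lborel)"
    by (rule Bochner_Integration.integral_cong) (auto simp: f_def indicator_def JQ)
  have step5: "(\<integral>r. f r * Q r \<partial>lborel) = (LBINT r:{D0..D1}. exp (- (real l * \<gamma> * \<sigma>2 * r powr \<alpha> / P))
              * exp (- 2 * pi * \<mu> * F_i \<alpha> \<gamma> l D1 r)
              * (2 * r / (D1\<^sup>2 - D0\<^sup>2)))"
    unfolding set_lebesgue_integral_def
    by (rule Bochner_Integration.integral_cong) (auto simp: f_def Q_def indicator_def)
  show ?thesis using step1 step2 step3 step4 step5 by simp
qed

end
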